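(* Suppose Assumptions 3 and 6 hold and fix a positive integer $N$. Then for every sufficiently large $n$, $$\begin{aligned}R_n(\mathbf w_{n,N}^* )=\ &\mathrm{tr}(\mathbf P_1\boldsymbol\Omega)+\boldsymbol\mu^\top(\mathbf I_n-\mathbf P_{M_n})\boldsymbol\mu\\ &+\sum_{i=i_{n,N}+1}^{N}\ \sum_{m=m_n(\frac{2i+1}{2N})+1}^{m_n(\frac{2i-1}{2N})}\Big[\big(\tfrac iN\big)^2 b_m+\big(1-\tfrac iN\big)^2 a_m\Big]\\ &+\sum_{m=m_n(\frac{2i_{n,N}+1}{2N})+1}^{M_n}\Big[\big(\tfrac{i_{n,N}}N\big)^2 b_m+\big(1-\tfrac{i_{n,N}}N\big)^2 a_m\Big],\end{aligned}$$ where sums with upper limit smaller than lower limit are zero. Equivalently, $$R_n(\mathbf w_{n,N}^* )=R_n(\mathbf w_n^* )+\sum_{m=2}^{M_n}(a_m+b_m)\sum_{i=0}^{N}\Big(\tfrac iN-\gamma_{n,m}^*\Big)^2\,\mathbf 1\Big\{\tfrac{2i-1}{2N}<\gamma_{n,m}^*\le\tfrac{2i+1}{2N}\Big\}.$$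
   Context: Setting. For each sample size $n$ one observes $\mathbf y=\boldsymbol\mu+\boldsymbol\varepsilon\in\mathbb R^n$ with $\boldsymbol\mu=\mathbf X\boldsymbol\beta$, where $\mathbf X$ is a nonstochastic $n\times p_n$ matrix with $p_n<n$, $E(\boldsymbol\varepsilon)=\mathbf 0$, $\mathrm{Cov}(\boldsymbol\varepsilon)=\boldsymbol\Omega$ positive definite. Fix integers $0=\nu_0<\nu_1<\cdots<\nu_{q_n}=p_n$; $\mathbf X_m$ is the matrix of the first $\nu_m$ columns of $\mathbf X$ (full column rank), $\mathbf P_m=\mathbf X_m(\mathbf X_m^\top\mathbf X_m)^{-1}\mathbf X_m^\top$, $\mathbf P_0=\mathbf 0$. Candidate models $m\in\{1,\dots,M_n\}$, $2\le M_n\le q_n$. $R_n(m)=E\|\mathbf P_m\mathbf y-\boldsymbol\mu\|^2$, $R_n(\mathbf w)=E\|\sum_{m=1}^{M_n}w_m\mathbf P_m\mathbf y-\boldsymbol\mu\|^2$. $\mathcal W_n=\{\mathbf w\in[0,1]^{M_n}:\sum_m w_m=1\}$, $\mathcal W_n(N)=\{\mathbf w:w_m\in\{0,1/N,\dots,1\},\sum_m w_m=1\}$; $\mathbf w_n^*$ and $\mathbf w_{n,N}^*$ minimize $R_n(\mathbf w)$ over $\mathcal W_n$ and $\mathcal W_n(N)$ respectively. Write $a_m=\boldsymbol\mu^\top(\mathbf P_m-\mathbf P_{m-1})\boldsymbol\mu$, $b_m=\mathrm{tr}\{(\mathbf P_m-\mathbf P_{m-1})\boldsymbol\Omega\}$,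 $\theta_{n,m}=a_m/(n b_m)$, $d_n=\max\{m:\theta_{n,m}>0\}$. Define $\gamma_{n,1}^*=1$ and $\gamma_{n,m}^*=\dfrac{a_m}{a_m+b_m}=\dfrac{\theta_{n,m}}{\theta_{n,m}+1/n}$ for $m\ge2$; $i_{n,N}=\lceil N\gamma_{n,M_n}^*-\tfrac12\rceil$. For $z\in(0,1)$, $m_n(z)=\max\big(\{1\}\cup\{m\in\{2,\dots,q_n\}:\theta_{n,m}>\tfrac{z}{(1-z)n}\}\big)$ (under Assumption 3 this is the index satisfying $\theta_{n,m_n(z)}>\frac{z}{(1-z)n}\ge\theta_{n,m_n(z)+1}$), and $m_n(z)=1$ for $z\ge1$. Assumption 3: for each large $n$, $\theta_{n,1}\ge\cdots\ge\theta_{n,q_n}$. Assumption 6: for each large $n$ there is $m_n'\in\{1,\dots,d_n-1\}$ with $R_n(m)<R_n(m-1)$ for $2\le m\le m_n'$, $R_n(m)\ge R_n(m-1)$ for $m_n'<m\le d_n$, and $R_n(d_n)>R_n(d_n-1)$. *)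

theory Defs
  imports "HOL-Probability.Probability" "Jordan_Normal_Form.Gauss_Jordan_Elimination"
begin

text \<open>Per-sample-size objects. A design matrix X (n x p), the block boundaries nu,
 coefficient vector beta, error covariance Omega. n is dim_row X.\<close>

definition trace_mat :: "real mat \<Rightarrow> real" where
  "trace_mat A = (\<Sum>i<dim_row A. A $$ (i, i))"

definition firstcols :: "real mat \<Rightarrow> nat \<Rightarrow> real mat" where
  "firstcols X k = mat (dim_row X) k (\<lambda>(i, j). X $$ (i, j))"

definition projm :: "real mat \<Rightarrow> nat \<Rightarrow> real mat" where
  "projm X k = (let Xk = firstcols X k in
      Xk * the (mat_inverse (transpose_mat Xk * Xk)) * transpose_mat Xk)"

definition Pm :: "real mat \<Rightarrow> (nat \<Rightarrow> nat) \<Rightarrow> nat \<Rightarrow> real mat" where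
  "Pm X \<nu> m = (if m = 0 then 0\<^sub>m (dim_row X) (dim_row X) else projm X (\<nu> m))"

definition a_coef :: "real mat \<Rightarrow> (nat \<Rightarrow> nat) \<Rightarrow> real vec \<Rightarrow> nat \<Rightarrow> real" where
  "a_coef X \<nu> \<beta> m = (let \<mu> = X *\<^sub>v \<beta> in \<mu> \<bullet> ((Pm X \<nu> m - Pm X \<nu> (m - 1)) *\<^sub>v \<mu>))"

definition b_coef :: "real mat \<Rightarrow> (nat \<Rightarrow> nat) \<Rightarrow> real mat \<Rightarrow> nat \<Rightarrow> real" where
  "b_coef X \<nu> \<Omega> m = trace_mat ((Pm X \<nu> m - Pm X \<nu> (m - 1)) * \<Omega>)"

definition theta :: "real mat \<Rightarrow> (nat \<Rightarrow> nat) \<Rightarrow> real vec \<Rightarrow> real mat \<Rightarrow> nat \<Rightarrow> real" where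
  "theta X \<nu> \<beta> \<Omega> m = a_coef X \<nu> \<beta> m / (real (dim_row X) * b_coef X \<nu> \<Omega> m)"

definition d_idx :: "real mat \<Rightarrow> (nat \<Rightarrow> nat) \<Rightarrow> real vec \<Rightarrow> real mat \<Rightarrow> nat \<Rightarrow> nat" where
  "d_idx X \<nu> \<beta> \<Omega> q = Max {m \<in> {1..q}. theta X \<nu> \<beta> \<Omega> m > 0}"

definition gamma_star :: "real mat \<Rightarrow> (nat \<Rightarrow> nat) \<Rightarrow> real vec \<Rightarrow> real mat \<Rightarrow> nat \<Rightarrow> real" where
  "gamma_star X \<nu> \<beta> \<Omega> m = (if m = 1 then 1 else
     a_coef X \<nu> \<beta> m / (a_coef X \<nu> \<beta> m + b_coef X \<nu> \<Omega> m))"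

definition i_idx :: "real mat \<Rightarrow> (nat \<Rightarrow> nat) \<Rightarrow> real vec \<Rightarrow> real mat \<Rightarrow> nat \<Rightarrow> nat \<Rightarrow> int" where
  "i_idx X \<nu> \<beta> \<Omega> M N = \<lceil>real N * gamma_star X \<nu> \<beta> \<Omega> M - 1 / 2\<rceil>"

definition m_of :: "real mat \<Rightarrow> (nat \<Rightarrow> nat) \<Rightarrow> real vec \<Rightarrow> real mat \<Rightarrow> nat \<Rightarrow> real \<Rightarrow> nat" where
  "m_of X \<nu> \<beta> \<Omega> q z = (if z \<ge> 1 then 1 else
     Max ({1} \<union> {m \<in> {2..q}. theta X \<nu> \<beta> \<Omega> m > z / ((1 - z) * real (dim_row X))}))"

definition risk :: "'a measure \<Rightarrow> ('a \<Rightarrow> real vec) \<Rightarrow> real mat \<Rightarrow> real vec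
    \<Rightarrow> (real vec \<Rightarrow> real vec) \<Rightarrow> real" where
  "risk P eps X \<beta> est = (let \<mu> = X *\<^sub>v \<beta> in
     integral\<^sup>L P (\<lambda>\<omega>. \<Sum>i<dim_row X. (est (\<mu> + eps \<omega>) $ i - \<mu> $ i)\<^sup>2))"

definition risk_model :: "'a measure \<Rightarrow> ('a \<Rightarrow> real vec) \<Rightarrow> real mat \<Rightarrow> (nat \<Rightarrow> nat)
    \<Rightarrow> real vec \<Rightarrow> nat \<Rightarrow> real" where
  "risk_model P eps X \<nu> \<beta> m = risk P eps X \<beta> (\<lambda>y. Pm X \<nu> m *\<^sub>v y)"

definition risk_weight :: "'a measure \<Rightarrow> ('a \<Rightarrow> real vec) \<Rightarrow> real mat \<Rightarrow> (nat \<Rightarrow> nat)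
    \<Rightarrow> real vec \<Rightarrow> nat \<Rightarrow> (nat \<Rightarrow> real) \<Rightarrow> real" where
  "risk_weight P eps X \<nu> \<beta> M w = risk P eps X \<beta>
     (\<lambda>y. vec (dim_row X) (\<lambda>i. \<Sum>m\<in>{1..M}. w m * (Pm X \<nu> m *\<^sub>v y) $ i))"

definition weights :: "nat \<Rightarrow> (nat \<Rightarrow> real) set" where
  "weights M = {w. (\<forall>m\<in>{1..M}. 0 \<le> w m \<and> w m \<le> 1) \<and> (\<forall>m. m \<notin> {1..M} \<longrightarrow> w m = 0)
      \<and> (\<Sum>m\<in>{1..M}. w m) = 1}"

definition weights_grid :: "nat \<Rightarrow> nat \<Rightarrow> (nat \<Rightarrow> real) set" where
  "weights_grid M N = {w \<in> weights M. \<forall>m\<in>{1..M}. \<exists>k\<in>{0..N}. w m = real k / real N}"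

definition pos_def_mat :: "real mat \<Rightarrow> bool" where
  "pos_def_mat A \<longleftrightarrow> (\<exists>n. A \<in> carrier_mat n n \<and> transpose_mat A = A \<and>
      (\<forall>v\<in>carrier_vec n. v \<noteq> 0\<^sub>v n \<longrightarrow> v \<bullet> (A *\<^sub>v v) > 0))"

end

theory Submission imports Defs "Jordan_Normal_Form.Determinant" begin

lemma trace_mat_carrier: "A \<in> carrier_mat n n \<Longrightarrow> trace_mat A = (\<Sum>i<n. A $$ (i,i))"
  unfolding trace_mat_def by simp

lemma quad_sum:
  assumes "A \<in> carrier_mat n n" "v \<in> carrier_vec n" "w \<in> carrier_vec n"
  shows "v \<bullet> (A *\<^sub>v w) = (\<Sum>i<n. v $ i * (\<Sum>k<n. A $$ (i,k) * w $ k))"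
  using assms by (auto simp: scalar_prod_def atLeast0LessThan intro!: sum.cong)

lemma mult_entry:
  assumes "A \<in> carrier_mat n k" "B \<in> carrier_mat k m" "i < n" "j < m"
  shows "(A * B) $$ (i,j) = (\<Sum>l<k. A $$ (i,l) * B $$ (l,j))"
  using assms by (auto simp: scalar_prod_def atLeast0LessThan intro!: sum.cong)

lemma trace_comm:
  assumes A: "A \<in> carrier_mat n k" and B: "B \<in> carrier_mat k n"
  shows "trace_mat (A * B) = trace_mat (B * A)"
proof -
  have "trace_mat (A * B) = (\<Sum>i<n. \<Sum>l<k. A $$ (i,l) * B $$ (l,i))"
    using assms by (simp add: trace_mat_carrier[of _ n] mult_entry[OF A B] del: index_mult_mat)
  also have "\<dots> = (\<Sum>l<k. \<Sum>i<n. B $$ (l,i) * A $$ (i,l))"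
    by (subst sum.swap) (simp add: mult.commute)
  also have "\<dots> = trace_mat (B * A)"
    using assms by (simp add: trace_mat_carrier[of _ k] mult_entry[OF B A] del: index_mult_mat)
  finally show ?thesis .
qed

lemma self_scalar_zero:
  fixes v :: "real vec"
  assumes "v \<in> carrier_vec n" "v \<bullet> v = 0" shows "v = 0\<^sub>v n"
proof -
  have "(\<Sum>i\<in>{0..<n}. v $ i * v $ i) = 0" using assms unfolding scalar_prod_def by simp
  hence "\<forall>i\<in>{0..<n}. v $ i * v $ i = 0"
    by (subst sum_nonneg_eq_0_iff[symmetric]) auto
  thus ?thesis using assms by (auto intro!: eq_vecI)
qed

lemma gram_inverse:
  fixes Y :: "real mat"
  assumes Y: "Y \<in> carrier_mat n k"
    and rk: "\<forall>v\<in>carrier_vec k. Y *\<^sub>v v = 0\<^sub>v n \<longrightarrow> v = 0\<^sub>v k"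
  shows "\<exists>B. mat_inverse (transpose_mat Y * Y) = Some B \<and>
     (transpose_mat Y * Y) * B = 1\<^sub>m k \<and> B * (transpose_mat Y * Y) = 1\<^sub>m k \<and> B \<in> carrier_mat k k"
proof -
  let ?G = "transpose_mat Y * Y"
  have G: "?G \<in> carrier_mat k k" using Y by auto
  have nz: "\<not> (\<exists>v. v \<in> carrier_vec k \<and> v \<noteq> 0\<^sub>v k \<and> ?G *\<^sub>v v = 0\<^sub>v k)"
  proof
    assume "\<exists>v. v \<in> carrier_vec k \<and> v \<noteq> 0\<^sub>v k \<and> ?G *\<^sub>v v = 0\<^sub>v k"
    then obtain v :: "real Matrix.vec" where v: "v \<in> carrier_vec k" "v \<noteq> 0\<^sub>v k" "?G *\<^sub>v v = 0\<^sub>v k"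
      by auto
    have Yv: "Y *\<^sub>v v \<in> carrier_vec n" using Y v by auto
    have "?G *\<^sub>v v = transpose_mat Y *\<^sub>v (Y *\<^sub>v v)" using Y v by auto
    with v(3) have "transpose_mat Y *\<^sub>v (Y *\<^sub>v v) = 0\<^sub>v k" by simp
    hence "(transpose_mat Y *\<^sub>v (Y *\<^sub>v v)) \<bullet> v = 0" using v(1) by simp
    hence "(Y *\<^sub>v v) \<bullet> (Y *\<^sub>v v) = 0"
      using transpose_vec_mult_scalar[OF Y v(1) Yv] by simp
    hence "Y *\<^sub>v v = 0\<^sub>v n" using self_scalar_zero[OF Yv] by simp
    thus False using rk v by auto
  qed
  have U: "?G \<in> Units (ring_mat TYPE(real) k k)"
    by (rule det_non_zero_imp_unit[OF G]) (use nz det_0_iff_vec_prod_zero[OF G] in blast)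
  then obtain B where "mat_inverse ?G = Some B"
    using mat_inverse(1)[OF G, of k] U by (cases "mat_inverse ?G") auto
  thus ?thesis using mat_inverse(2)[OF G] by auto
qed

lemma proj_props:
  fixes Y :: "real mat"
  assumes Y: "Y \<in> carrier_mat n k"
    and rk: "\<forall>v\<in>carrier_vec k. Y *\<^sub>v v = 0\<^sub>v n \<longrightarrow> v = 0\<^sub>v k"
  defines "P \<equiv> Y * the (mat_inverse (transpose_mat Y * Y)) * transpose_mat Y"
  shows "P \<in> carrier_mat n n" "transpose_mat P = P" "P * Y = Y" "trace_mat P = real k"
    "the (mat_inverse (transpose_mat Y * Y)) \<in> carrier_mat k k"
proof -
  let ?G = "transpose_mat Y * Y"
  obtain B where B: "mat_inverse ?G = Some B" "?G * B = 1\<^sub>m k" "B * ?G = 1\<^sub>m k" "B \<in> carrier_mat k k"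
    using gram_inverse[OF Y rk] by blast
  have PB: "P = Y * B * transpose_mat Y" unfolding P_def B(1) by simp
  show "the (mat_inverse (transpose_mat Y * Y)) \<in> carrier_mat k k" using B by simp
  have YT: "transpose_mat Y \<in> carrier_mat k n" using Y by simp
  have G: "?G \<in> carrier_mat k k" using Y by simp
  show Pc: "P \<in> carrier_mat n n" unfolding PB using Y B(4) by simp
  have Gsym: "transpose_mat ?G = ?G" using transpose_mult[OF YT Y] by simp
  have "transpose_mat B * ?G = transpose_mat (?G * B)"
    using transpose_mult[OF G B(4)] Gsym by simp
  also have "\<dots> = 1\<^sub>m k" using B(2) by simp
  finally have BtG: "transpose_mat B * ?G = 1\<^sub>m k" .
  have Bt: "transpose_mat B \<in> carrier_mat k k" using B(4) by simp
  have "transpose_mat B = transpose_mat B * (?G * B)" using B(2) Bt by simp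
  also have "\<dots> = (transpose_mat B * ?G) * B" using Bt G B(4) by (simp add: assoc_mult_mat)
  also have "\<dots> = B" using BtG B(4) by simp
  finally have Bsym: "transpose_mat B = B" .
  show "transpose_mat P = P" unfolding PB
    using transpose_mult[OF mult_carrier_mat[OF Y B(4)] YT] transpose_mult[OF Y B(4)] Bsym Y B(4)
    by (simp add: assoc_mult_mat)
  have "P * Y = Y * B * (transpose_mat Y * Y)" unfolding PB
    by (rule assoc_mult_mat[OF mult_carrier_mat[OF Y B(4)] YT Y])
  also have "\<dots> = Y * (B * ?G)" by (rule assoc_mult_mat[OF Y B(4) G])
  also have "\<dots> = Y" using B(3) Y by simp
  finally show "P * Y = Y" .
  have "trace_mat P = trace_mat ((Y * B) * transpose_mat Y)" unfolding PB ..
  also have "\<dots> = trace_mat (transpose_mat Y * (Y * B))"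
    by (rule trace_comm[OF mult_carrier_mat[OF Y B(4)] YT])
  also have "transpose_mat Y * (Y * B) = B * ?G" 
  proof -
    have "transpose_mat Y * (Y * B) = ?G * B" using YT Y B(4) by (simp add: assoc_mult_mat)
    also have "\<dots> = 1\<^sub>m k" by (rule B(2))
    also have "\<dots> = B * ?G" using B(3) by simp
    finally show ?thesis .
  qed
  also have "trace_mat (B * ?G) = real k" using B(3) by (simp add: trace_mat_def)
  finally show "trace_mat P = real k" .
qed

definition selm :: "nat \<Rightarrow> nat \<Rightarrow> real mat" where
  "selm k j = mat k j (\<lambda>(i,l). if i = l then 1 else 0)"

lemma firstcols_sel:
  assumes "j \<le> k"
  shows "firstcols X j = firstcols X k * selm k j"
proof (rule eq_matI)
  fix r l assume r: "r < dim_row (firstcols X k * selm k j)" and l: "l < dim_col (firstcols X k * selm k j)"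
  hence r': "r < dim_row X" and l': "l < j" by (auto simp: firstcols_def selm_def)
  have "(firstcols X k * selm k j) $$ (r,l) = (\<Sum>i<k. firstcols X k $$ (r,i) * selm k j $$ (i,l))"
    by (rule mult_entry[of _ "dim_row X" k _ j]) (use r' l' in \<open>auto simp: firstcols_def selm_def\<close>)
  also have "\<dots> = (\<Sum>i<k. if i = l then X $$ (r,l) else 0)"
    using r' l' assms by (intro sum.cong) (auto simp: firstcols_def selm_def)
  also have "\<dots> = X $$ (r,l)" using l' assms by simp
  finally show "firstcols X j $$ (r, l) = (firstcols X k * selm k j) $$ (r, l)"
    using r' l' by (simp add: firstcols_def)
qed (auto simp: firstcols_def selm_def)

lemma integral_sum2:
  fixes f :: "nat \<Rightarrow> nat \<Rightarrow> 'a \<Rightarrow> real"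
  assumes "\<And>k l. k < n \<Longrightarrow> l < m \<Longrightarrow> integrable M (f k l)"
  shows "integral\<^sup>L M (\<lambda>x. \<Sum>k<n. \<Sum>l<m. c k l * f k l x) = (\<Sum>k<n. \<Sum>l<m. c k l * integral\<^sup>L M (f k l))"
  using assms
  by (subst Bochner_Integration.integral_sum)
     (auto intro!: Bochner_Integration.integrable_sum Bochner_Integration.integrable_mult_right sum.cong
       simp: Bochner_Integration.integral_sum)

lemma swap3: "(\<Sum>i\<in>I. \<Sum>a\<in>A. \<Sum>b\<in>B. f i a b) = (\<Sum>a\<in>A. \<Sum>b\<in>B. \<Sum>i\<in>I. f i a b)"
  by (subst sum.swap) (simp add: sum.swap[of _ I])

lemma bilin:
  fixes w :: "nat \<Rightarrow> real"
  shows "(\<Sum>i\<in>I. \<Sum>a\<in>A. \<Sum>b\<in>B. (\<Sum>j\<in>J. w j * F j i a) * (\<Sum>j'\<in>J. w j' * F j' i b) * W a b)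
     = (\<Sum>j\<in>J. \<Sum>j'\<in>J. w j * w j' * (\<Sum>i\<in>I. \<Sum>a\<in>A. \<Sum>b\<in>B. F j i a * F j' i b * W a b))"
proof -
  have eq: "(\<Sum>j\<in>J. w j * F j x y) * (\<Sum>j'\<in>J. w j' * F j' x z) * W y z
     = (\<Sum>j\<in>J. \<Sum>j'\<in>J. w j * w j' * (F j x y * F j' x z * W y z))" for x y z
    by (subst sum_product) (simp add: sum_distrib_right sum_distrib_left mult_ac)
  have "(\<Sum>i\<in>I. \<Sum>a\<in>A. \<Sum>b\<in>B. (\<Sum>j\<in>J. w j * F j i a) * (\<Sum>j'\<in>J. w j' * F j' i b) * W a b)
     = (\<Sum>i\<in>I. \<Sum>a\<in>A. \<Sum>b\<in>B. \<Sum>j\<in>J. \<Sum>j'\<in>J. w j * w j' * (F j i a * F j' i b * W a b))"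
    by (simp only: eq)
  also have "\<dots> = (\<Sum>i\<in>I. \<Sum>a\<in>A. \<Sum>j\<in>J. \<Sum>j'\<in>J. \<Sum>b\<in>B. w j * w j' * (F j i a * F j' i b * W a b))"
    by (simp add: swap3[where I=B and A=J and B=J])
  also have "\<dots> = (\<Sum>i\<in>I. \<Sum>j\<in>J. \<Sum>j'\<in>J. \<Sum>a\<in>A. \<Sum>b\<in>B. w j * w j' * (F j i a * F j' i b * W a b))"
    by (simp add: swap3[where I=A and A=J and B=J])
  also have "\<dots> = (\<Sum>j\<in>J. \<Sum>j'\<in>J. \<Sum>i\<in>I. \<Sum>a\<in>A. \<Sum>b\<in>B. w j * w j' * (F j i a * F j' i b * W a b))"
    by (simp add: swap3[where I=I and A=J and B=J])
  also have "\<dots> = (\<Sum>j\<in>J. \<Sum>j'\<in>J. w j * w j' * (\<Sum>i\<in>I. \<Sum>a\<in>A. \<Sum>b\<in>B. F j i a * F j' i b * W a b))"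
    by (simp add: sum_distrib_left)
  finally show ?thesis .
qed

lemma tele: "(f::nat\<Rightarrow>real) 0 = (0::real) \<Longrightarrow> (\<Sum>m\<in>{1..k::nat}. f m - f (m - 1)) = f k"
  by (induction k) (auto simp: sum.atLeast_Suc_atMost_Suc_shift)

lemma tele_ind:
  fixes k M :: nat and f :: "nat \<Rightarrow> real"
  assumes "f 0 = (0::real)" "k \<le> M"
  shows "f k = (\<Sum>m\<in>{1..M}. if m \<le> k then f m - f (m - 1) else 0)"
proof -
  have "(\<Sum>m\<in>{1..M}. if m \<le> k then f m - f (m - 1) else 0) = (\<Sum>m\<in>{x\<in>{1..M}. x \<le> k}. f m - f (m - 1))"
    by (rule sum.inter_filter[symmetric]) simp
  also have "{x\<in>{1..M}. x \<le> k} = {1..k}" using assms by auto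
  finally show ?thesis using tele[where f=f, OF assms(1)] by simp
qed

lemma tail_ind:
  fixes m M :: nat
  assumes "1 \<le> m"
  shows "(\<Sum>j\<in>{1..M}. if m \<le> j then w j else (0::real)) = (\<Sum>j\<in>{m..M}. w j)"
proof -
  have "(\<Sum>j\<in>{1..M}. if m \<le> j then w j else (0::real)) = (\<Sum>j\<in>{x\<in>{1..M}. m \<le> x}. w j)"
    by (rule sum.inter_filter[symmetric]) simp
  also have "{x\<in>{1..M}. m \<le> x} = {m..M}" using assms by auto
  finally show ?thesis .
qed

lemma abel1:
  fixes f w :: "nat \<Rightarrow> real"
  assumes "f 0 = (0::real)"
  shows "(\<Sum>j\<in>{1..M}. w j * f j) = (\<Sum>m\<in>{1..M}. (f m - f (m - 1)) * (\<Sum>j\<in>{m..M}. w j))"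
proof -
  have "(\<Sum>j\<in>{1..M}. w j * f j) = (\<Sum>j\<in>{1..M}. \<Sum>m\<in>{1..M}. if m \<le> j then (f m - f (m - 1)) * w j else 0)"
    by (intro sum.cong refl) (simp add: tele_ind[where f=f and M=M, OF assms] sum_distrib_left if_distrib mult.commute cong: if_cong)
  also have "\<dots> = (\<Sum>m\<in>{1..M}. \<Sum>j\<in>{1..M}. if m \<le> j then (f m - f (m - 1)) * w j else 0)"
    by (rule sum.swap)
  also have "\<dots> = (\<Sum>m\<in>{1..M}. (f m - f (m - 1)) * (\<Sum>j\<in>{1..M}. if m \<le> j then w j else 0))"
    by (simp add: sum_distrib_left if_distrib cong: if_cong)
  also have "\<dots> = (\<Sum>m\<in>{1..M}. (f m - f (m - 1)) * (\<Sum>j\<in>{m..M}. w j))"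
  proof (intro sum.cong refl)
    fix m assume "m \<in> {1..M}" hence m1: "1 \<le> m" by simp
    show "(f m - f (m - 1)) * (\<Sum>j\<in>{1..M}. if m \<le> j then w j else 0) = (f m - f (m - 1)) * (\<Sum>j\<in>{m..M}. w j)"
      by (simp only: tail_ind[OF m1])
  qed
  finally show ?thesis .
qed

lemma abel2:
  fixes f w :: "nat \<Rightarrow> real"
  assumes "f 0 = (0::real)"
  shows "(\<Sum>j\<in>{1..M}. \<Sum>j'\<in>{1..M}. w j * w j' * f (min j j'))
     = (\<Sum>m\<in>{1..M}. (f m - f (m - 1)) * (\<Sum>j\<in>{m..M}. w j)\<^sup>2)"
proof -
  let ?d = "\<lambda>m. f m - f (m - 1)"
  have "(\<Sum>j\<in>{1..M}. \<Sum>j'\<in>{1..M}. w j * w j' * f (min j j'))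
     = (\<Sum>j\<in>{1..M}. \<Sum>j'\<in>{1..M}. \<Sum>m\<in>{1..M}. ?d m * ((if m \<le> j then w j else 0) * (if m \<le> j' then w j' else 0)))"
  proof (intro sum.cong refl)
    fix j j' assume "j \<in> {1..M}" "j' \<in> {1..M}"
    hence "min j j' \<le> M" by (auto simp: min_def)
    hence "f (min j j') = (\<Sum>m\<in>{1..M}. if m \<le> min j j' then ?d m else 0)" by (rule tele_ind[where f=f, OF assms])
    thus "w j * w j' * f (min j j') = (\<Sum>m\<in>{1..M}. ?d m * ((if m \<le> j then w j else 0) * (if m \<le> j' then w j' else 0)))"
      by (simp add: sum_distrib_left) (intro sum.cong refl, auto)
  qed
  also have "\<dots> = (\<Sum>m\<in>{1..M}. \<Sum>j\<in>{1..M}. \<Sum>j'\<in>{1..M}. ?d m * ((if m \<le> j then w j else 0) * (if m \<le> j' then w j' else 0)))"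
    by (rule swap3[symmetric])
  also have "\<dots> = (\<Sum>m\<in>{1..M}. ?d m * ((\<Sum>j\<in>{1..M}. if m \<le> j then w j else 0) * (\<Sum>j'\<in>{1..M}. if m \<le> j' then w j' else 0)))"
    by (intro sum.cong refl) (subst sum_product, simp only: sum_distrib_left)
  also have "\<dots> = (\<Sum>m\<in>{1..M}. ?d m * (\<Sum>j\<in>{m..M}. w j)\<^sup>2)"
  proof (intro sum.cong refl)
    fix m assume "m \<in> {1..M}" hence m1: "1 \<le> m" by simp
    show "?d m * ((\<Sum>j\<in>{1..M}. if m \<le> j then w j else 0) * (\<Sum>j'\<in>{1..M}. if m \<le> j' then w j' else 0)) = ?d m * (\<Sum>j\<in>{m..M}. w j)\<^sup>2"
      by (simp only: tail_ind[OF m1] power2_eq_square)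
  qed
  finally show ?thesis .
qed

lemma risk_expand:
  fixes eps :: "'a \<Rightarrow> real Matrix.vec" and u :: "nat \<Rightarrow> real" and A :: "nat \<Rightarrow> nat \<Rightarrow> real"
    and Om :: "real mat"
  assumes ps: "prob_space Pr"
    and em: "\<forall>i<n. (\<lambda>\<omega>. eps \<omega> $ i) \<in> borel_measurable Pr \<and>
             integrable Pr (\<lambda>\<omega>. (eps \<omega> $ i)\<^sup>2) \<and>
             integral\<^sup>L Pr (\<lambda>\<omega>. eps \<omega> $ i) = 0"
    and ec: "\<forall>i<n. \<forall>j<n. integral\<^sup>L Pr (\<lambda>\<omega>. eps \<omega> $ i * eps \<omega> $ j) = Om $$ (i, j)"
  shows "integral\<^sup>L Pr (\<lambda>\<omega>. \<Sum>i<n. (u i + (\<Sum>k<n. A i k * eps \<omega> $ k))\<^sup>2)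
       = (\<Sum>i<n. (u i)\<^sup>2) + (\<Sum>i<n. \<Sum>k<n. \<Sum>l<n. A i k * A i l * Om $$ (k,l))"
proof -
  interpret prob_space Pr by (rule ps)
  have int1: "integrable Pr (\<lambda>\<omega>. eps \<omega> $ k)" if "k < n" for k
    using em that square_integrable_imp_integrable by blast
  have int2: "integrable Pr (\<lambda>\<omega>. eps \<omega> $ k * eps \<omega> $ l)" if "k < n" "l < n" for k l
  proof (rule Bochner_Integration.integrable_bound[where f="\<lambda>\<omega>. (eps \<omega> $ k)\<^sup>2 + (eps \<omega> $ l)\<^sup>2"])
    show "integrable Pr (\<lambda>\<omega>. (eps \<omega> $ k)\<^sup>2 + (eps \<omega> $ l)\<^sup>2)" using em that by auto
    show "(\<lambda>\<omega>. eps \<omega> $ k * eps \<omega> $ l) \<in> borel_measurable Pr"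
      using em that by (intro borel_measurable_times) auto
    show "AE \<omega> in Pr. norm (eps \<omega> $ k * eps \<omega> $ l) \<le> norm ((eps \<omega> $ k)\<^sup>2 + (eps \<omega> $ l)\<^sup>2)"
    proof (rule AE_I2)
      fix \<omega>
      have "\<bar>eps \<omega> $ k * eps \<omega> $ l\<bar> \<le> (eps \<omega> $ k)\<^sup>2 + (eps \<omega> $ l)\<^sup>2"
      proof -
        have h: "2 * \<bar>eps \<omega> $ k\<bar> * \<bar>eps \<omega> $ l\<bar> \<le> \<bar>eps \<omega> $ k\<bar>\<^sup>2 + \<bar>eps \<omega> $ l\<bar>\<^sup>2"
          by (rule sum_squares_bound)
        have h0: "0 \<le> \<bar>eps \<omega> $ k\<bar> * \<bar>eps \<omega> $ l\<bar>" by simp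
        have h1: "\<bar>eps \<omega> $ k * eps \<omega> $ l\<bar> = \<bar>eps \<omega> $ k\<bar> * \<bar>eps \<omega> $ l\<bar>" by (simp add: abs_mult)
        have h2: "\<bar>eps \<omega> $ k\<bar>\<^sup>2 + \<bar>eps \<omega> $ l\<bar>\<^sup>2 = (eps \<omega> $ k)\<^sup>2 + (eps \<omega> $ l)\<^sup>2" by simp
        show ?thesis using h h0 h1 h2 by linarith
      qed
      thus "norm (eps \<omega> $ k * eps \<omega> $ l) \<le> norm ((eps \<omega> $ k)\<^sup>2 + (eps \<omega> $ l)\<^sup>2)" by simp
    qed
  qed
  have pt: "(\<Sum>i<n. (u i + (\<Sum>k<n. A i k * eps \<omega> $ k))\<^sup>2) =
     (\<Sum>i<n. (u i)\<^sup>2) + (\<Sum>i<n. \<Sum>k<n. (2 * u i * A i k) * eps \<omega> $ k)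
     + (\<Sum>i<n. \<Sum>k<n. \<Sum>l<n. (A i k * A i l) * (eps \<omega> $ k * eps \<omega> $ l))" for \<omega>
  proof -
    have "(u i + (\<Sum>k<n. A i k * eps \<omega> $ k))\<^sup>2 = (u i)\<^sup>2 + (\<Sum>k<n. (2 * u i * A i k) * eps \<omega> $ k)
       + (\<Sum>k<n. \<Sum>l<n. (A i k * A i l) * (eps \<omega> $ k * eps \<omega> $ l))" for i
      by (simp add: power2_eq_square algebra_simps sum_distrib_left sum_distrib_right sum_product)
    thus ?thesis by (simp add: sum.distrib)
  qed
  have "integral\<^sup>L Pr (\<lambda>\<omega>. \<Sum>i<n. (u i + (\<Sum>k<n. A i k * eps \<omega> $ k))\<^sup>2)
     = integral\<^sup>L Pr (\<lambda>\<omega>. (\<Sum>i<n. (u i)\<^sup>2) + (\<Sum>i<n. \<Sum>k<n. (2 * u i * A i k) * eps \<omega> $ k)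
     + (\<Sum>i<n. \<Sum>k<n. \<Sum>l<n. (A i k * A i l) * (eps \<omega> $ k * eps \<omega> $ l)))"
    by (simp only: pt)
  also have "\<dots> = (\<Sum>i<n. (u i)\<^sup>2) + (\<Sum>i<n. \<Sum>k<n. (2 * u i * A i k) * integral\<^sup>L Pr (\<lambda>\<omega>. eps \<omega> $ k))
     + (\<Sum>i<n. \<Sum>k<n. \<Sum>l<n. (A i k * A i l) * integral\<^sup>L Pr (\<lambda>\<omega>. eps \<omega> $ k * eps \<omega> $ l))"
  proof -
    have A1: "integrable Pr (\<lambda>\<omega>. \<Sum>i<n. \<Sum>k<n. (2 * u i * A i k) * eps \<omega> $ k)"
      using int1 by (auto intro!: Bochner_Integration.integrable_sum Bochner_Integration.integrable_mult_right)
    have A3: "integrable Pr (\<lambda>\<omega>. \<Sum>i<n. \<Sum>k<n. \<Sum>l<n. (A i k * A i l) * (eps \<omega> $ k * eps \<omega> $ l))"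
      using int2 by (auto intro!: Bochner_Integration.integrable_sum Bochner_Integration.integrable_mult_right)
    have A0: "integrable Pr (\<lambda>\<omega>. (\<Sum>i<n. (u i)\<^sup>2))" by simp
    have I1: "integral\<^sup>L Pr (\<lambda>\<omega>. \<Sum>i<n. \<Sum>k<n. (2 * u i * A i k) * eps \<omega> $ k)
       = (\<Sum>i<n. \<Sum>k<n. (2 * u i * A i k) * integral\<^sup>L Pr (\<lambda>\<omega>. eps \<omega> $ k))"
      using int1 by (subst Bochner_Integration.integral_sum) (auto intro!: Bochner_Integration.integrable_sum Bochner_Integration.integrable_mult_right sum.cong simp: Bochner_Integration.integral_sum)
    have I3: "integral\<^sup>L Pr (\<lambda>\<omega>. \<Sum>i<n. \<Sum>k<n. \<Sum>l<n. (A i k * A i l) * (eps \<omega> $ k * eps \<omega> $ l))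
       = (\<Sum>i<n. \<Sum>k<n. \<Sum>l<n. (A i k * A i l) * integral\<^sup>L Pr (\<lambda>\<omega>. eps \<omega> $ k * eps \<omega> $ l))"
      using int2 by (subst Bochner_Integration.integral_sum)
        (auto intro!: Bochner_Integration.integrable_sum Bochner_Integration.integrable_mult_right sum.cong
            integral_sum2)
    show ?thesis
      apply (subst Bochner_Integration.integral_add[OF Bochner_Integration.integrable_add[OF A0 A1] A3])
      apply (subst Bochner_Integration.integral_add[OF A0 A1])
      using I1 I3 by (simp add: prob_space)
  qed
  also have "\<dots> = (\<Sum>i<n. (u i)\<^sup>2) + (\<Sum>i<n. \<Sum>k<n. \<Sum>l<n. A i k * A i l * Om $$ (k,l))"
    using em ec by simp
  finally show ?thesis .
qed

locale LA =
  fixes X :: "real mat" and n p q M N :: nat and \<nu> :: "nat \<Rightarrow> nat" and \<beta> :: "real Matrix.vec"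
    and \<Omega> :: "real mat" and Pr :: "'a measure" and eps :: "'a \<Rightarrow> real Matrix.vec"
  assumes Xc: "X \<in> carrier_mat n p" and pn: "p < n" and nu0: "\<nu> 0 = 0"
    and numono: "\<forall>m<q. \<nu> m < \<nu> (Suc m)" and nuq: "\<nu> q = p"
    and rank: "\<forall>m\<in>{1..q}. \<forall>v\<in>carrier_vec (\<nu> m).
          firstcols X (\<nu> m) *\<^sub>v v = 0\<^sub>v n \<longrightarrow> v = 0\<^sub>v (\<nu> m)"
    and M2: "2 \<le> M" and Mq: "M \<le> q" and betac: "\<beta> \<in> carrier_vec p"
    and Omc: "\<Omega> \<in> carrier_mat n n" and Ompd: "pos_def_mat \<Omega>"
    and prob: "prob_space Pr" and epsc: "\<forall>\<omega>\<in>space Pr. eps \<omega> \<in> carrier_vec n"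
    and epsm: "\<forall>i<n. (\<lambda>\<omega>. eps \<omega> $ i) \<in> borel_measurable Pr \<and>
             integrable Pr (\<lambda>\<omega>. (eps \<omega> $ i)\<^sup>2) \<and>
             integral\<^sup>L Pr (\<lambda>\<omega>. eps \<omega> $ i) = 0"
    and epscov: "\<forall>i<n. \<forall>j<n. integral\<^sup>L Pr (\<lambda>\<omega>. eps \<omega> $ i * eps \<omega> $ j) = \<Omega> $$ (i, j)"
    and th3: "\<forall>m\<in>{1..<q}. theta X \<nu> \<beta> \<Omega> m \<ge> theta X \<nu> \<beta> \<Omega> (Suc m)"
    and Npos: "0 < N"
begin

abbreviation P where "P k \<equiv> Pm X \<nu> k"

lemma dimX[simp]: "dim_row X = n" using Xc by simp

lemma nu_le: "j \<le> k \<Longrightarrow> k \<le> q \<Longrightarrow> \<nu> j \<le> \<nu> k"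
proof (induction k)
  case (Suc k)
  show ?case
  proof (cases "j = Suc k")
    case False
    hence "\<nu> j \<le> \<nu> k" using Suc by auto
    moreover have "\<nu> k < \<nu> (Suc k)" using numono Suc.prems by auto
    ultimately show ?thesis by simp
  qed simp
qed simp

lemma nu_less: "j < k \<Longrightarrow> k \<le> q \<Longrightarrow> \<nu> j < \<nu> k"
  using nu_le[of "Suc j" k] numono[rule_format, of j] by simp

lemma Y_props:
  assumes "1 \<le> k" "k \<le> q"
  shows "firstcols X (\<nu> k) \<in> carrier_mat n (\<nu> k)"
    "P k = firstcols X (\<nu> k) * the (mat_inverse (transpose_mat (firstcols X (\<nu> k)) * firstcols X (\<nu> k)))
          * transpose_mat (firstcols X (\<nu> k))"
  using assms by (auto simp: firstcols_def Pm_def projm_def Let_def)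

lemma proj_k:
  assumes "1 \<le> k" "k \<le> q"
  shows "P k \<in> carrier_mat n n" "transpose_mat (P k) = P k" "P k * firstcols X (\<nu> k) = firstcols X (\<nu> k)"
    "trace_mat (P k) = real (\<nu> k)"
    "the (mat_inverse (transpose_mat (firstcols X (\<nu> k)) * firstcols X (\<nu> k))) \<in> carrier_mat (\<nu> k) (\<nu> k)"
proof -
  have r: "\<forall>v\<in>carrier_vec (\<nu> k). firstcols X (\<nu> k) *\<^sub>v v = 0\<^sub>v n \<longrightarrow> v = 0\<^sub>v (\<nu> k)"
    using rank assms by auto
  note pp = proj_props[OF Y_props(1)[OF assms] r, folded Y_props(2)[OF assms]]
  show "P k \<in> carrier_mat n n" "transpose_mat (P k) = P k" "P k * firstcols X (\<nu> k) = firstcols X (\<nu> k)"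
    "trace_mat (P k) = real (\<nu> k)"
    "the (mat_inverse (transpose_mat (firstcols X (\<nu> k)) * firstcols X (\<nu> k))) \<in> carrier_mat (\<nu> k) (\<nu> k)"
    using pp by auto
qed

lemma P_carrier: "k \<le> q \<Longrightarrow> P k \<in> carrier_mat n n"
  using proj_k(1)[of k] by (cases "k = 0") (auto simp: Pm_def)

lemma P_sym: "k \<le> q \<Longrightarrow> transpose_mat (P k) = P k"
  using proj_k(2)[of k] by (cases "k = 0") (auto simp: Pm_def)

lemma P_trace: "k \<le> q \<Longrightarrow> trace_mat (P k) = real (\<nu> k)"
  using proj_k(4)[of k] nu0 by (cases "k = 0") (auto simp: Pm_def trace_mat_def)

lemma P_nest:
  assumes "j \<le> k" "k \<le> q"
  shows "P k * P j = P j"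
proof (cases "j = 0")
  case True thus ?thesis using P_carrier[OF assms(2)] by (simp add: Pm_def)
next
  case False
  hence j1: "1 \<le> j" and k1: "1 \<le> k" using assms by auto
  have jq: "j \<le> q" using assms by simp
  let ?Yj = "firstcols X (\<nu> j)" and ?Yk = "firstcols X (\<nu> k)"
  let ?Bj = "the (mat_inverse (transpose_mat ?Yj * ?Yj))"
  have Yj: "?Yj \<in> carrier_mat n (\<nu> j)" and Yk: "?Yk \<in> carrier_mat n (\<nu> k)"
    using Y_props(1) j1 k1 assms by auto
  have S: "selm (\<nu> k) (\<nu> j) \<in> carrier_mat (\<nu> k) (\<nu> j)" by (simp add: selm_def)
  have Bj: "?Bj \<in> carrier_mat (\<nu> j) (\<nu> j)" using proj_k(5)[OF j1 jq] .
  have Pk: "P k \<in> carrier_mat n n" using P_carrier assms by simp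
  have YjT: "transpose_mat ?Yj \<in> carrier_mat (\<nu> j) n" using Yj by simp
  have eqY: "?Yj = ?Yk * selm (\<nu> k) (\<nu> j)" using firstcols_sel nu_le[OF assms] by blast
  have PY: "P k * ?Yj = ?Yj"
  proof -
    have "P k * ?Yj = P k * ?Yk * selm (\<nu> k) (\<nu> j)"
      unfolding eqY by (rule assoc_mult_mat[OF Pk Yk S, symmetric])
    also have "\<dots> = ?Yj" using proj_k(3)[OF k1 assms(2)] eqY by simp
    finally show ?thesis .
  qed
  have Pj: "P j = ?Yj * ?Bj * transpose_mat ?Yj" using Y_props(2)[OF j1 jq] .
  have "P k * P j = P k * (?Yj * ?Bj) * transpose_mat ?Yj"
    unfolding Pj by (rule assoc_mult_mat[OF Pk mult_carrier_mat[OF Yj Bj] YjT, symmetric])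
  also have "P k * (?Yj * ?Bj) = P k * ?Yj * ?Bj"
    by (rule assoc_mult_mat[OF Pk Yj Bj, symmetric])
  also have "\<dots> = ?Yj * ?Bj" using PY by simp
  finally show ?thesis using Pj by simp
qed

lemma P_prod:
  assumes "j \<le> q" "k \<le> q"
  shows "P j * P k = P (min j k)"
proof (cases "j \<le> k")
  case True
  have "P j * P k = transpose_mat (P k * P j)"
    using transpose_mult[OF P_carrier[OF assms(2)] P_carrier[OF assms(1)]] P_sym assms by simp
  also have "\<dots> = P j" using P_nest[OF True assms(2)] P_sym assms by simp
  finally show ?thesis using True by simp
next
  case False thus ?thesis using P_nest[of k j] assms by simp
qed

definition mu where "mu = X *\<^sub>v \<beta>"
definition cc where "cc k = mu \<bullet> (P k *\<^sub>v mu)"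
definition ee where "ee k = trace_mat (P k * \<Omega>)"

lemma mu_c: "mu \<in> carrier_vec n" using Xc betac by (simp add: mu_def)

lemma Om_sym: "a < n \<Longrightarrow> b < n \<Longrightarrow> \<Omega> $$ (a,b) = \<Omega> $$ (b,a)"
proof -
  assume ab: "a < n" "b < n"
  have "transpose_mat \<Omega> = \<Omega>" using Ompd by (auto simp: pos_def_mat_def)
  hence "transpose_mat \<Omega> $$ (b,a) = \<Omega> $$ (b,a)" by simp
  thus ?thesis using ab Omc by simp
qed

lemma Om_pos: "v \<in> carrier_vec n \<Longrightarrow> v \<noteq> 0\<^sub>v n \<Longrightarrow> v \<bullet> (\<Omega> *\<^sub>v v) > 0"
  using Ompd Omc by (auto simp: pos_def_mat_def)

lemma Om_nonneg: "v \<in> carrier_vec n \<Longrightarrow> v \<bullet> (\<Omega> *\<^sub>v v) \<ge> 0"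
  using Om_pos[of v] by (cases "v = 0\<^sub>v n") (auto simp: scalar_prod_def)

lemma Pe_sym: "k \<le> q \<Longrightarrow> a < n \<Longrightarrow> b < n \<Longrightarrow> P k $$ (a,b) = P k $$ (b,a)"
proof -
  assume k: "k \<le> q" and ab: "a < n" "b < n"
  have "transpose_mat (P k) $$ (b,a) = P k $$ (b,a)" using P_sym[OF k] by simp
  thus ?thesis using ab P_carrier[OF k] by simp
qed

lemma Pe_prod:
  assumes "j \<le> q" "k \<le> q" "a < n" "b < n"
  shows "(\<Sum>i<n. P j $$ (i,a) * P k $$ (i,b)) = P (min j k) $$ (a,b)"
proof -
  have "(\<Sum>i<n. P j $$ (i,a) * P k $$ (i,b)) = (\<Sum>i<n. P j $$ (a,i) * P k $$ (i,b))"
    using assms by (intro sum.cong refl) (simp add: Pe_sym)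
  also have "\<dots> = (P j * P k) $$ (a,b)"
    by (rule mult_entry[OF P_carrier[OF assms(1)] P_carrier[OF assms(2)] assms(3,4), symmetric])
  finally show ?thesis using P_prod[OF assms(1,2)] by simp
qed

lemma cc_sum: "k \<le> q \<Longrightarrow> cc k = (\<Sum>a<n. \<Sum>b<n. P k $$ (a,b) * (mu $ a * mu $ b))"
  unfolding cc_def
  by (subst quad_sum[OF P_carrier mu_c mu_c], assumption)
     (simp add: sum_distrib_left mult_ac)

lemma ee_sum: "k \<le> q \<Longrightarrow> ee k = (\<Sum>a<n. \<Sum>b<n. P k $$ (a,b) * \<Omega> $$ (a,b))"
proof -
  assume k: "k \<le> q"
  have "ee k = (\<Sum>a<n. (P k * \<Omega>) $$ (a,a))"
    unfolding ee_def using P_carrier[OF k] Omc by (simp add: trace_mat_carrier[of _ n])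
  also have "\<dots> = (\<Sum>a<n. \<Sum>b<n. P k $$ (a,b) * \<Omega> $$ (b,a))"
    by (intro sum.cong refl) (rule mult_entry[OF P_carrier[OF k] Omc], auto)
  also have "\<dots> = (\<Sum>a<n. \<Sum>b<n. P k $$ (a,b) * \<Omega> $$ (a,b))"
    by (intro sum.cong refl) (simp add: Om_sym)
  finally show ?thesis .
qed

lemma tt:
  assumes "j \<le> q" "k \<le> q"
  shows "(\<Sum>i<n. \<Sum>a<n. \<Sum>b<n. P j $$ (i,a) * P k $$ (i,b) * W a b)
       = (\<Sum>a<n. \<Sum>b<n. P (min j k) $$ (a,b) * W a b)"
proof -
  have "(\<Sum>i<n. \<Sum>a<n. \<Sum>b<n. P j $$ (i,a) * P k $$ (i,b) * W a b)
      = (\<Sum>a<n. \<Sum>b<n. \<Sum>i<n. P j $$ (i,a) * P k $$ (i,b) * W a b)" by (rule swap3)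
  also have "\<dots> = (\<Sum>a<n. \<Sum>b<n. (\<Sum>i<n. P j $$ (i,a) * P k $$ (i,b)) * W a b)"
    by (simp add: sum_distrib_right)
  also have "\<dots> = (\<Sum>a<n. \<Sum>b<n. P (min j k) $$ (a,b) * W a b)"
    using assms by (intro sum.cong refl) (simp add: Pe_prod)
  finally show ?thesis .
qed

lemma cc0: "cc 0 = 0" unfolding cc_def using mu_c by (subst quad_sum[of _ n]) (auto simp: Pm_def)
lemma ee0: "ee 0 = 0" unfolding ee_def using Omc by (simp add: Pm_def trace_mat_def)


definition Aw where "Aw w i k = (\<Sum>m\<in>{1..M}. w m * P m $$ (i,k))"

lemma mv_entry: "A \<in> carrier_mat n' n' \<Longrightarrow> v \<in> carrier_vec n' \<Longrightarrow> i < n' \<Longrightarrow>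
   (A *\<^sub>v v) $ i = (\<Sum>k<n'. A $$ (i,k) * v $ k)"
  by (auto simp: scalar_prod_def atLeast0LessThan intro!: sum.cong)

lemma risk_w1:
  "risk_weight Pr eps X \<nu> \<beta> M w =
     (\<Sum>i<n. ((\<Sum>k<n. Aw w i k * mu $ k) - mu $ i)\<^sup>2) + (\<Sum>i<n. \<Sum>k<n. \<Sum>l<n. Aw w i k * Aw w i l * \<Omega> $$ (k,l))"
proof -
  let ?u = "\<lambda>i. (\<Sum>k<n. Aw w i k * mu $ k) - mu $ i"
  have pt: "(\<Sum>i<n. (vec n (\<lambda>i. \<Sum>m\<in>{1..M}. w m * (P m *\<^sub>v (mu + eps \<omega>)) $ i) $ i - mu $ i)\<^sup>2)
     = (\<Sum>i<n. (?u i + (\<Sum>k<n. Aw w i k * eps \<omega> $ k))\<^sup>2)" if \<omega>: "\<omega> \<in> space Pr" for \<omega>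
  proof (intro sum.cong refl)
    fix i assume "i \<in> {..<n}" hence i: "i < n" by simp
    have ec: "eps \<omega> \<in> carrier_vec n" using epsc \<omega> by auto
    have mec: "mu + eps \<omega> \<in> carrier_vec n" using ec mu_c by simp
    have "(\<Sum>m\<in>{1..M}. w m * (P m *\<^sub>v (mu + eps \<omega>)) $ i)
        = (\<Sum>m\<in>{1..M}. w m * (\<Sum>k<n. P m $$ (i,k) * (mu $ k + eps \<omega> $ k)))"
    proof (intro sum.cong refl)
      fix m assume "m \<in> {1..M}" hence "m \<le> q" using Mq by simp
      thus "w m * (P m *\<^sub>v (mu + eps \<omega>)) $ i = w m * (\<Sum>k<n. P m $$ (i,k) * (mu $ k + eps \<omega> $ k))"
        using mv_entry[OF P_carrier mec i] i ec mu_c by simp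
    qed
    also have "\<dots> = (\<Sum>k<n. Aw w i k * mu $ k) + (\<Sum>k<n. Aw w i k * eps \<omega> $ k)"
      unfolding Aw_def
      by (simp add: sum_distrib_left sum_distrib_right distrib_left sum.distrib mult_ac)
         (simp add: sum.swap[where A="{..<n}"])
    finally show "(vec n (\<lambda>i. \<Sum>m\<in>{1..M}. w m * (P m *\<^sub>v (mu + eps \<omega>)) $ i) $ i - mu $ i)\<^sup>2
       = (?u i + (\<Sum>k<n. Aw w i k * eps \<omega> $ k))\<^sup>2" using i by (simp add: algebra_simps)
  qed
  have "risk_weight Pr eps X \<nu> \<beta> M w = integral\<^sup>L Pr (\<lambda>\<omega>. \<Sum>i<n. (?u i + (\<Sum>k<n. Aw w i k * eps \<omega> $ k))\<^sup>2)"
    unfolding risk_weight_def risk_def Let_def dimX mu_def[symmetric]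
    by (rule Bochner_Integration.integral_cong[OF refl pt])
  also have "\<dots> = (\<Sum>i<n. (?u i)\<^sup>2) + (\<Sum>i<n. \<Sum>k<n. \<Sum>l<n. Aw w i k * Aw w i l * \<Omega> $$ (k,l))"
    by (rule risk_expand[OF prob epsm epscov])
  finally show ?thesis .
qed


definition acf where "acf m = cc m - cc (m - 1)"
definition bcf where "bcf m = ee m - ee (m - 1)"
definition Tw where "Tw w m = (\<Sum>j\<in>{m..M}. w j)"

lemma minq: "j \<in> {1..M} \<Longrightarrow> j' \<in> {1..M} \<Longrightarrow> min j j' \<le> q"
  using Mq by (auto simp: min_def)

lemma S2: "(\<Sum>i<n. (\<Sum>k<n. Aw w i k * mu $ k)\<^sup>2) = (\<Sum>m\<in>{1..M}. acf m * (Tw w m)\<^sup>2)"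
proof -
  have "(\<Sum>i<n. (\<Sum>k<n. Aw w i k * mu $ k)\<^sup>2)
      = (\<Sum>i<n. \<Sum>a<n. \<Sum>b<n. Aw w i a * Aw w i b * (mu $ a * mu $ b))"
    by (simp add: power2_eq_square sum_product mult_ac)
  also have "\<dots> = (\<Sum>j\<in>{1..M}. \<Sum>j'\<in>{1..M}. w j * w j' *
       (\<Sum>i<n. \<Sum>a<n. \<Sum>b<n. P j $$ (i,a) * P j' $$ (i,b) * (mu $ a * mu $ b)))"
    unfolding Aw_def by (rule bilin)
  also have "\<dots> = (\<Sum>j\<in>{1..M}. \<Sum>j'\<in>{1..M}. w j * w j' * cc (min j j'))"
    using Mq by (intro sum.cong refl) (simp add: tt cc_sum minq)
  also have "\<dots> = (\<Sum>m\<in>{1..M}. acf m * (Tw w m)\<^sup>2)"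
    unfolding acf_def Tw_def by (rule abel2[where f=cc, OF cc0])
  finally show ?thesis .
qed

lemma S1: "(\<Sum>i<n. mu $ i * (\<Sum>k<n. Aw w i k * mu $ k)) = (\<Sum>m\<in>{1..M}. acf m * Tw w m)"
proof -
  have "(\<Sum>i<n. mu $ i * (\<Sum>k<n. Aw w i k * mu $ k))
      = (\<Sum>i<n. \<Sum>k<n. \<Sum>j\<in>{1..M}. w j * (P j $$ (i,k) * (mu $ i * mu $ k)))"
    unfolding Aw_def by (simp add: sum_distrib_left sum_distrib_right mult_ac)
  also have "\<dots> = (\<Sum>j\<in>{1..M}. \<Sum>i<n. \<Sum>k<n. w j * (P j $$ (i,k) * (mu $ i * mu $ k)))"
    by (rule swap3[symmetric])
  also have "\<dots> = (\<Sum>j\<in>{1..M}. w j * (\<Sum>i<n. \<Sum>k<n. P j $$ (i,k) * (mu $ i * mu $ k)))"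
    by (simp add: sum_distrib_left)
  also have "\<dots> = (\<Sum>j\<in>{1..M}. w j * cc j)"
    using Mq by (intro sum.cong refl) (simp add: cc_sum)
  also have "\<dots> = (\<Sum>m\<in>{1..M}. acf m * Tw w m)"
    unfolding acf_def Tw_def by (subst abel1[where f=cc, OF cc0]) (simp add: mult.commute)
  finally show ?thesis .
qed

lemma S3: "(\<Sum>i<n. \<Sum>k<n. \<Sum>l<n. Aw w i k * Aw w i l * \<Omega> $$ (k,l)) = (\<Sum>m\<in>{1..M}. bcf m * (Tw w m)\<^sup>2)"
proof -
  have "(\<Sum>i<n. \<Sum>k<n. \<Sum>l<n. Aw w i k * Aw w i l * \<Omega> $$ (k,l))
      = (\<Sum>j\<in>{1..M}. \<Sum>j'\<in>{1..M}. w j * w j' *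
       (\<Sum>i<n. \<Sum>a<n. \<Sum>b<n. P j $$ (i,a) * P j' $$ (i,b) * \<Omega> $$ (a,b)))"
    unfolding Aw_def by (rule bilin)
  also have "\<dots> = (\<Sum>j\<in>{1..M}. \<Sum>j'\<in>{1..M}. w j * w j' * ee (min j j'))"
    using Mq by (intro sum.cong refl) (simp add: tt ee_sum minq)
  also have "\<dots> = (\<Sum>m\<in>{1..M}. bcf m * (Tw w m)\<^sup>2)"
    unfolding bcf_def Tw_def by (rule abel2[where f=ee, OF ee0])
  finally show ?thesis .
qed

lemma mumu: "mu \<bullet> mu = (\<Sum>i<n. (mu $ i)\<^sup>2)"
  using mu_c by (simp add: scalar_prod_def power2_eq_square atLeast0LessThan)

lemma risk_w2:
  "risk_weight Pr eps X \<nu> \<beta> M w =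
     (mu \<bullet> mu - cc M) + (\<Sum>m\<in>{1..M}. (Tw w m)\<^sup>2 * bcf m + (1 - Tw w m)\<^sup>2 * acf m)"
proof -
  have sa: "(\<Sum>m\<in>{1..M}. acf m) = cc M" unfolding acf_def by (rule tele[where f=cc, OF cc0])
  have "(\<Sum>i<n. ((\<Sum>k<n. Aw w i k * mu $ k) - mu $ i)\<^sup>2)
     = (\<Sum>i<n. (\<Sum>k<n. Aw w i k * mu $ k)\<^sup>2) - 2 * (\<Sum>i<n. mu $ i * (\<Sum>k<n. Aw w i k * mu $ k))
       + (\<Sum>i<n. (mu $ i)\<^sup>2)"
    by (simp add: power2_diff sum.distrib sum_subtractf sum_distrib_left mult_ac)
  hence "risk_weight Pr eps X \<nu> \<beta> M w =
     (\<Sum>m\<in>{1..M}. acf m * (Tw w m)\<^sup>2) - 2 * (\<Sum>m\<in>{1..M}. acf m * Tw w m) + mu \<bullet> mu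
      + (\<Sum>m\<in>{1..M}. bcf m * (Tw w m)\<^sup>2)"
    using risk_w1[of w] S1 S2 S3 mumu by simp
  also have "\<dots> = (mu \<bullet> mu - (\<Sum>m\<in>{1..M}. acf m)) + (\<Sum>m\<in>{1..M}. (Tw w m)\<^sup>2 * bcf m + (1 - Tw w m)\<^sup>2 * acf m)"
    by (simp add: power2_diff sum.distrib sum_subtractf sum_distrib_left algebra_simps)
  finally show ?thesis using sa by simp
qed


lemma acoef_eq: "1 \<le> m \<Longrightarrow> m \<le> q \<Longrightarrow> a_coef X \<nu> \<beta> m = acf m"
proof -
  assume m: "1 \<le> m" "m \<le> q"
  have c1: "P m \<in> carrier_mat n n" and c2: "P (m - 1) \<in> carrier_mat n n" using P_carrier m by auto
  show ?thesis
    unfolding a_coef_def Let_def mu_def[symmetric] acf_def cc_def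
    using minus_mult_distrib_mat_vec[OF c1 c2 mu_c] scalar_prod_minus_distrib[OF mu_c] c1 c2 mu_c
    by simp
qed

lemma trace_minus: "A \<in> carrier_mat n' n' \<Longrightarrow> B \<in> carrier_mat n' n' \<Longrightarrow> trace_mat (A - B) = trace_mat A - trace_mat B"
  by (simp add: trace_mat_def sum_subtractf)

lemma bcoef_eq: "1 \<le> m \<Longrightarrow> m \<le> q \<Longrightarrow> b_coef X \<nu> \<Omega> m = bcf m"
proof -
  assume m: "1 \<le> m" "m \<le> q"
  have c1: "P m \<in> carrier_mat n n" and c2: "P (m - 1) \<in> carrier_mat n n" using P_carrier m by auto
  show ?thesis
    unfolding b_coef_def bcf_def ee_def
    using minus_mult_distrib_mat[OF c1 c2 Omc] trace_minus[of "P m * \<Omega>" n "P (m - 1) * \<Omega>"] c1 c2 Omc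
    by simp
qed

lemma K_eq: "mu \<bullet> ((1\<^sub>m n - P M) *\<^sub>v mu) = mu \<bullet> mu - cc M"
proof -
  have c: "P M \<in> carrier_mat n n" using P_carrier Mq by auto
  show ?thesis unfolding cc_def
    using minus_mult_distrib_mat_vec[OF one_carrier_mat c mu_c] scalar_prod_minus_distrib[OF mu_c] c mu_c
    by simp
qed

lemma dd:
  assumes "1 \<le> m" "m \<le> q"
  shows "(\<Sum>i<n. \<Sum>a<n. \<Sum>b<n. (P m $$ (i,a) - P (m-1) $$ (i,a)) * (P m $$ (i,b) - P (m-1) $$ (i,b)) * W a b)
     = (\<Sum>a<n. \<Sum>b<n. P m $$ (a,b) * W a b) - (\<Sum>a<n. \<Sum>b<n. P (m-1) $$ (a,b) * W a b)"
proof -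
  have q1: "m - 1 \<le> q" using assms by simp
  have e: "(P m $$ (i,a) - P (m-1) $$ (i,a)) * (P m $$ (i,b) - P (m-1) $$ (i,b)) * W a b
     = P m $$ (i,a) * P m $$ (i,b) * W a b - P m $$ (i,a) * P (m-1) $$ (i,b) * W a b
       - P (m-1) $$ (i,a) * P m $$ (i,b) * W a b + P (m-1) $$ (i,a) * P (m-1) $$ (i,b) * W a b" for i a b
    by (simp add: algebra_simps)
  show ?thesis
    unfolding e sum.distrib sum_subtractf
    using tt[OF assms(2) assms(2), of W] tt[OF assms(2) q1, of W] tt[OF q1 assms(2), of W] tt[OF q1 q1, of W]
    by simp
qed

lemma acf_nonneg: "1 \<le> m \<Longrightarrow> m \<le> q \<Longrightarrow> acf m \<ge> 0"
proof -
  assume m: "1 \<le> m" "m \<le> q"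
  have q1: "m - 1 \<le> q" using m by simp
  let ?D = "\<lambda>i a. P m $$ (i,a) - P (m-1) $$ (i,a)"
  have "acf m = (\<Sum>i<n. \<Sum>a<n. \<Sum>b<n. ?D i a * ?D i b * (mu $ a * mu $ b))"
    unfolding acf_def cc_sum[OF m(2)] cc_sum[OF q1] dd[OF m] by (simp add: mult_ac)
  also have "\<dots> = (\<Sum>i<n. (\<Sum>a<n. ?D i a * mu $ a)\<^sup>2)"
    by (simp add: power2_eq_square sum_product mult_ac)
  finally show ?thesis by (simp add: sum_nonneg)
qed

lemma bcf_pos: "1 \<le> m \<Longrightarrow> m \<le> q \<Longrightarrow> bcf m > 0"
proof -
  assume m: "1 \<le> m" "m \<le> q"
  have q1: "m - 1 \<le> q" using m by simp
  let ?D = "\<lambda>i a. P m $$ (i,a) - P (m-1) $$ (i,a)"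
  let ?v = "\<lambda>i. vec n (\<lambda>a. ?D i a)"
  have "bcf m = (\<Sum>i<n. \<Sum>a<n. \<Sum>b<n. ?D i a * ?D i b * \<Omega> $$ (a,b))"
    unfolding bcf_def ee_sum[OF m(2)] ee_sum[OF q1] dd[OF m] by simp
  also have "\<dots> = (\<Sum>i<n. ?v i \<bullet> (\<Omega> *\<^sub>v ?v i))"
  proof (intro sum.cong refl)
    fix i
    show "(\<Sum>a<n. \<Sum>b<n. ?D i a * ?D i b * \<Omega> $$ (a,b)) = ?v i \<bullet> (\<Omega> *\<^sub>v ?v i)"
      by (subst quad_sum[OF Omc]) (auto simp: sum_distrib_left mult_ac intro!: sum.cong)
  qed
  finally have bs: "bcf m = (\<Sum>i<n. ?v i \<bullet> (\<Omega> *\<^sub>v ?v i))" .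
  have tr: "(\<Sum>i<n. ?D i i) = real (\<nu> m) - real (\<nu> (m - 1))"
    using P_trace[OF m(2)] P_trace[OF q1] P_carrier[OF m(2)] P_carrier[OF q1]
    by (simp add: trace_mat_carrier[of _ n] sum_subtractf)
  have "\<nu> (m - 1) < \<nu> m" using nu_less[of "m - 1" m] m by simp
  hence "(\<Sum>i<n. ?D i i) \<noteq> 0" using tr by simp
  then obtain i where i: "i < n" "?D i i \<noteq> 0" by (meson sum.neutral lessThan_iff)
  have vi: "?v i \<noteq> 0\<^sub>v n"
  proof
    assume "?v i = 0\<^sub>v n"
    hence "?v i $ i = 0\<^sub>v n $ i" by simp
    thus False using i by simp
  qed
  have "(\<Sum>i<n. ?v i \<bullet> (\<Omega> *\<^sub>v ?v i)) > 0"
  proof (rule sum_pos2[of "{..<n}" i])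
    show "?v i \<bullet> (\<Omega> *\<^sub>v ?v i) > 0" using Om_pos[OF _ vi] by simp
    show "\<And>j. j \<in> {..<n} \<Longrightarrow> 0 \<le> ?v j \<bullet> (\<Omega> *\<^sub>v ?v j)" using Om_nonneg by simp
  qed (use i in auto)
  thus ?thesis using bs by simp
qed


definition gm where "gm m = acf m / (acf m + bcf m)"

lemma npos: "0 < n" using pn by simp

lemma gm_bounds: "1 \<le> m \<Longrightarrow> m \<le> q \<Longrightarrow> 0 \<le> gm m \<and> gm m < 1"
  using acf_nonneg[of m] bcf_pos[of m] by (auto simp: gm_def field_simps)

lemma theta_eq: "1 \<le> m \<Longrightarrow> m \<le> q \<Longrightarrow> theta X \<nu> \<beta> \<Omega> m = acf m / (real n * bcf m)"
  unfolding theta_def using acoef_eq bcoef_eq by simp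

lemma gamma_eq: "2 \<le> m \<Longrightarrow> m \<le> q \<Longrightarrow> gamma_star X \<nu> \<beta> \<Omega> m = gm m"
  unfolding gamma_star_def gm_def using acoef_eq bcoef_eq by simp

lemma gm_step: "2 \<le> m \<Longrightarrow> Suc m \<le> q \<Longrightarrow> gm (Suc m) \<le> gm m"
proof -
  assume m: "2 \<le> m" "Suc m \<le> q"
  have "theta X \<nu> \<beta> \<Omega> (Suc m) \<le> theta X \<nu> \<beta> \<Omega> m" using th3 m by auto
  hence le: "acf (Suc m) / (real n * bcf (Suc m)) \<le> acf m / (real n * bcf m)"
    using theta_eq m by simp
  have b1: "bcf m > 0" and b2: "bcf (Suc m) > 0" using bcf_pos m by auto
  have a1: "acf m \<ge> 0" and a2: "acf (Suc m) \<ge> 0" using acf_nonneg m by auto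
  have "acf (Suc m) * bcf m \<le> acf m * bcf (Suc m)"
    using le npos b1 b2 by (simp add: divide_simps mult_ac)
  thus ?thesis unfolding gm_def using a1 a2 b1 b2 by (simp add: divide_simps algebra_simps)
qed

lemma gm_mono_aux:
  assumes "m \<le> m'" and m2: "2 \<le> m"
  shows "m' \<le> q \<longrightarrow> gm m' \<le> gm m"
  using assms(1)
proof (induction m' rule: dec_induct)
  case (step k)
  show ?case
  proof
    assume "Suc k \<le> q"
    hence "gm (Suc k) \<le> gm k" using gm_step[of k] step m2 by simp
    thus "gm (Suc k) \<le> gm m" using step \<open>Suc k \<le> q\<close> by simp
  qed
qed simp

lemma gm_mono: "2 \<le> m \<Longrightarrow> m \<le> m' \<Longrightarrow> m' \<le> q \<Longrightarrow> gm m' \<le> gm m"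
  using gm_mono_aux by blast

abbreviation mz where "mz \<equiv> m_of X \<nu> \<beta> \<Omega> q"

lemma theta_iff: "2 \<le> m \<Longrightarrow> m \<le> q \<Longrightarrow> 0 < z \<Longrightarrow> z < 1 \<Longrightarrow>
   theta X \<nu> \<beta> \<Omega> m > z / ((1 - z) * real n) \<longleftrightarrow> gm m > z"
proof -
  assume m: "2 \<le> m" "m \<le> q" and z: "0 < z" "z < 1"
  have b: "bcf m > 0" and a: "acf m \<ge> 0" using bcf_pos acf_nonneg m by auto
  have "theta X \<nu> \<beta> \<Omega> m > z / ((1 - z) * real n) \<longleftrightarrow> acf m / (real n * bcf m) > z / ((1 - z) * real n)"
    using theta_eq m by simp
  also have "\<dots> \<longleftrightarrow> z * bcf m < acf m * (1 - z)"
    using npos b z by (simp add: divide_simps mult_ac)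
  also have "\<dots> \<longleftrightarrow> gm m > z"
    unfolding gm_def using a b by (simp add: divide_simps algebra_simps)
  finally show ?thesis .
qed

lemma mz_props:
  assumes z: "0 < z"
  shows "1 \<le> mz z" "mz z \<le> q" "\<And>m. 2 \<le> m \<Longrightarrow> m \<le> q \<Longrightarrow> (m \<le> mz z \<longleftrightarrow> gm m > z)"
proof -
  have "1 \<le> mz z \<and> mz z \<le> q \<and> (\<forall>m. 2 \<le> m \<longrightarrow> m \<le> q \<longrightarrow> (m \<le> mz z \<longleftrightarrow> gm m > z))"
  proof (cases "z \<ge> 1")
    case True
    have "\<not> gm m > z" if "2 \<le> m" "m \<le> q" for m using gm_bounds[of m] that True by auto
    thus ?thesis using True Mq M2 by (auto simp: m_of_def)
  next
    case False
    let ?S = "{1} \<union> {m \<in> {2..q}. theta X \<nu> \<beta> \<Omega> m > z / ((1 - z) * real n)}"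
    have S: "?S = {1} \<union> {m \<in> {2..q}. gm m > z}" using theta_iff z False by auto
    have mzS: "mz z = Max ({1} \<union> {m \<in> {2..q}. gm m > z})" using False S by (simp add: m_of_def)
    have fin: "finite ({1} \<union> {m \<in> {2..q}. gm m > z})" by simp
    have mem: "Max ({1} \<union> {m \<in> {2..q}. gm m > z}) \<in> {1} \<union> {m \<in> {2..q}. gm m > z}"
      by (rule Max_in[OF fin]) simp
    have "1 \<le> mz z" using mzS fin by (simp add: Max_ge_iff)
    moreover have "mz z \<le> q" using mem mzS Mq M2 by auto
    moreover have "(m \<le> mz z \<longleftrightarrow> gm m > z)" if m: "2 \<le> m" "m \<le> q" for m
    proof
      assume "m \<le> mz z"
      hence "mz z \<noteq> 1" using m by auto
      hence "mz z \<in> {m \<in> {2..q}. gm m > z}" using mem mzS by auto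
      hence "gm (mz z) > z" "mz z \<le> q" by auto
      thus "gm m > z" using gm_mono[OF m(1) \<open>m \<le> mz z\<close>] by linarith
    next
      assume "gm m > z"
      hence "m \<in> {1} \<union> {m \<in> {2..q}. gm m > z}" using m by auto
      thus "m \<le> mz z" using mzS fin by simp
    qed
    ultimately show ?thesis by blast
  qed
  thus "1 \<le> mz z" "mz z \<le> q" "\<And>m. 2 \<le> m \<Longrightarrow> m \<le> q \<Longrightarrow> (m \<le> mz z \<longleftrightarrow> gm m > z)" by auto
qed


definition gg where "gg m t = t\<^sup>2 * bcf m + (1 - t)\<^sup>2 * acf m"
definition K0 where "K0 = mu \<bullet> mu - cc M"

lemma risk_w3:
  assumes "w \<in> weights M"
  shows "risk_weight Pr eps X \<nu> \<beta> M w = K0 + bcf 1 + (\<Sum>m\<in>{2..M}. gg m (Tw w m))"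
proof -
  have T1: "Tw w 1 = 1" using assms by (simp add: weights_def Tw_def)
  have "(\<Sum>m\<in>{1..M}. (Tw w m)\<^sup>2 * bcf m + (1 - Tw w m)\<^sup>2 * acf m)
      = ((Tw w 1)\<^sup>2 * bcf 1 + (1 - Tw w 1)\<^sup>2 * acf 1) + (\<Sum>m\<in>{Suc 1..M}. gg m (Tw w m))"
    using M2 by (subst sum.atLeast_Suc_atMost) (auto simp: gg_def)
  thus ?thesis using risk_w2[of w] T1 by (simp add: K0_def numeral_2_eq_2)
qed

lemma gg_alg:
  fixes a b t :: real
  assumes s: "a + b > 0"
  shows "t\<^sup>2 * b + (1 - t)\<^sup>2 * a = (a + b) * (t - a / (a + b))\<^sup>2 + a * b / (a + b)"
proof -
  have e: "t - a / (a + b) = (t * (a + b) - a) / (a + b)" using s by (simp add: field_simps)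
  have p: "(t * (a + b) - a)\<^sup>2 + a * b = (a + b) * (t\<^sup>2 * b + (1 - t)\<^sup>2 * a)"
    by (simp add: power2_eq_square algebra_simps)
  have "(a + b) * (t - a / (a + b))\<^sup>2 + a * b / (a + b) = ((t * (a + b) - a)\<^sup>2 + a * b) / (a + b)"
  proof -
    have h: "S * (y / S)\<^sup>2 + c / S = (y\<^sup>2 + c) / S" if "S > 0" for S y c :: real
      using that by (simp add: power2_eq_square field_simps)
    show ?thesis unfolding e using h[OF s] .
  qed
  also have "\<dots> = t\<^sup>2 * b + (1 - t)\<^sup>2 * a" unfolding p using s by simp
  finally show ?thesis by simp
qed

lemma gg_eq: "1 \<le> m \<Longrightarrow> m \<le> q \<Longrightarrow>
   gg m t = (acf m + bcf m) * (t - gm m)\<^sup>2 + acf m * bcf m / (acf m + bcf m)"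
proof -
  assume m: "1 \<le> m" "m \<le> q"
  have s: "acf m + bcf m > 0" using acf_nonneg[OF m] bcf_pos[OF m] by simp
  show ?thesis unfolding gg_def gm_def by (rule gg_alg[OF s])
qed

definition io where "io m = \<lceil>real N * gm m - 1 / 2\<rceil>"
definition rnd where "rnd m = real_of_int (io m) / real N"

lemma nearest:
  fixes k :: int
  shows "(rnd m - gm m)\<^sup>2 \<le> (real_of_int k / real N - gm m)\<^sup>2"
proof -
  let ?x = "real N * gm m"
  have c1: "real_of_int (io m) \<ge> ?x - 1/2" unfolding io_def by linarith
  have c2: "real_of_int (io m) < ?x + 1/2" unfolding io_def by linarith
  have "\<bar>real_of_int (io m) - ?x\<bar> \<le> \<bar>real_of_int k - ?x\<bar>"
  proof (cases "k = io m")
    case False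
    hence "k \<ge> io m + 1 \<or> k \<le> io m - 1" by linarith
    thus ?thesis
    proof
      assume "k \<ge> io m + 1"
      hence "real_of_int k \<ge> real_of_int (io m) + 1" by linarith
      thus ?thesis using c1 c2 by linarith
    next
      assume "k \<le> io m - 1"
      hence "real_of_int k \<le> real_of_int (io m) - 1" by linarith
      thus ?thesis using c1 c2 by linarith
    qed
  qed simp
  hence sq: "(real_of_int (io m) - ?x)\<^sup>2 \<le> (real_of_int k - ?x)\<^sup>2"
    by (metis abs_le_square_iff)
  have N: "real N > 0" using Npos by simp
  have e1: "rnd m - gm m = (real_of_int (io m) - ?x) / real N" unfolding rnd_def using N by (simp add: field_simps)
  have e2: "real_of_int k / real N - gm m = (real_of_int k - ?x) / real N" using N by (simp add: field_simps)
  show ?thesis unfolding e1 e2 power_divide using sq N by (simp add: divide_right_mono)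
qed

lemma io_bounds: "2 \<le> m \<Longrightarrow> m \<le> q \<Longrightarrow> 0 \<le> io m \<and> io m \<le> int N"
proof -
  assume m: "2 \<le> m" "m \<le> q"
  have g: "0 \<le> gm m" "gm m < 1" using gm_bounds m by auto
  have "real N * gm m \<ge> 0" using g by simp
  moreover have "real N * gm m \<le> real N" using g by (simp add: mult_left_le)
  ultimately show ?thesis unfolding io_def
    by (auto simp: ceiling_le_iff intro!: le_ceiling_iff[THEN iffD2])
qed

lemma io_mono: "2 \<le> m \<Longrightarrow> m \<le> m' \<Longrightarrow> m' \<le> q \<Longrightarrow> io m' \<le> io m"
  unfolding io_def using gm_mono[of m m'] Npos
  by (intro ceiling_mono) (simp add: mult_left_mono)

lemma weight_constr:
  fixes s :: "nat \<Rightarrow> real"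
  assumes s1: "s 1 = 1" and sM: "s (Suc M) = 0"
    and smono: "\<forall>m\<in>{1..M}. s (Suc m) \<le> s m"
    and sb: "\<forall>m\<in>{1..Suc M}. 0 \<le> s m \<and> s m \<le> 1"
  defines "w \<equiv> (\<lambda>m. if m \<in> {1..M} then s m - s (Suc m) else 0)"
  shows "w \<in> weights M" "\<forall>m\<in>{1..M}. Tw w m = s m"
proof -
  have T: "Tw w m = s m" if "m \<in> {1..M}" for m
  proof -
    have "Tw w m = (\<Sum>j\<in>{m..M}. s j - s (Suc j))"
      unfolding Tw_def w_def using that by (intro sum.cong refl) auto
    also have "\<dots> = - (\<Sum>j\<in>{m..M}. s (Suc j) - s j)" by (simp add: sum_negf[symmetric])
    also have "\<dots> = s m" using sum_Suc_diff[of m M s] that sM by simp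
    finally show ?thesis .
  qed
  thus "\<forall>m\<in>{1..M}. Tw w m = s m" by blast
  have "(\<Sum>m\<in>{1..M}. w m) = 1" using T[of 1] M2 s1 by (simp add: Tw_def)
  moreover have "0 \<le> w m \<and> w m \<le> 1" if "m \<in> {1..M}" for m
    using that smono sb[rule_format, of m] sb[rule_format, of "Suc m"] by (auto simp: w_def)
  ultimately show "w \<in> weights M" unfolding weights_def by (auto simp: w_def)
qed


abbreviation RW where "RW \<equiv> risk_weight Pr eps X \<nu> \<beta> M"

definition Fv where "Fv = K0 + bcf 1 + (\<Sum>m\<in>{2..M}. gg m (rnd m))"
definition Hv where "Hv = K0 + bcf 1 + (\<Sum>m\<in>{2..M}. gg m (gm m))"

lemma grid_T:
  assumes "w \<in> weights_grid M N"
  shows "\<exists>k::int. Tw w m = real_of_int k / real N"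
proof -
  have "\<forall>j\<in>{1..M}. \<exists>k\<in>{0..N}. w j = real k / real N" using assms by (simp add: weights_grid_def)
  then obtain kf where kf: "\<forall>j\<in>{1..M}. w j = real (kf j) / real N" by metis
  have w0: "\<forall>j. j \<notin> {1..M} \<longrightarrow> w j = 0" using assms by (simp add: weights_grid_def weights_def)
  let ?k = "\<Sum>j\<in>{m..M}. (if j \<in> {1..M} then kf j else 0)"
  have "Tw w m = (\<Sum>j\<in>{m..M}. if j \<in> {1..M} then real (kf j) / real N else 0)"
    unfolding Tw_def using kf w0 by (intro sum.cong refl) auto
  also have "\<dots> = (\<Sum>j\<in>{m..M}. real (if j \<in> {1..M} then kf j else 0) / real N)"
    by (intro sum.cong refl) auto
  also have "\<dots> = real ?k / real N"
    by (simp add: sum_divide_distrib[symmetric])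
  finally have "Tw w m = real_of_int (int ?k) / real N" by simp
  thus ?thesis by blast
qed

lemma grid_lb: "w \<in> weights_grid M N \<Longrightarrow> Fv \<le> RW w"
proof -
  assume w: "w \<in> weights_grid M N"
  hence ww: "w \<in> weights M" by (simp add: weights_grid_def)
  have "gg m (rnd m) \<le> gg m (Tw w m)" if "m \<in> {2..M}" for m
  proof -
    have m: "1 \<le> m" "m \<le> q" using that Mq by auto
    obtain k :: int where k: "Tw w m = real_of_int k / real N" using grid_T[OF w] by blast
    have s: "acf m + bcf m \<ge> 0" using acf_nonneg[OF m] bcf_pos[OF m] by simp
    show ?thesis unfolding gg_eq[OF m] k using mult_left_mono[OF nearest[of m k] s] by simp
  qed
  hence "(\<Sum>m\<in>{2..M}. gg m (rnd m)) \<le> (\<Sum>m\<in>{2..M}. gg m (Tw w m))" by (rule sum_mono)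
  thus ?thesis unfolding risk_w3[OF ww] Fv_def by simp
qed

lemma cont_lb: "w \<in> weights M \<Longrightarrow> Hv \<le> RW w"
proof -
  assume ww: "w \<in> weights M"
  have "gg m (gm m) \<le> gg m (Tw w m)" if "m \<in> {2..M}" for m
  proof -
    have m: "1 \<le> m" "m \<le> q" using that Mq by auto
    have s: "acf m + bcf m \<ge> 0" using acf_nonneg[OF m] bcf_pos[OF m] by simp
    show ?thesis unfolding gg_eq[OF m] using s by simp
  qed
  hence "(\<Sum>m\<in>{2..M}. gg m (gm m)) \<le> (\<Sum>m\<in>{2..M}. gg m (Tw w m))" by (rule sum_mono)
  thus ?thesis unfolding risk_w3[OF ww] Hv_def by simp
qed

definition JJ where "JJ m = (if m \<le> 1 then int N else if m \<le> M then io m else 0)"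

lemma JJ_props:
  shows "\<forall>m\<in>{1..M}. JJ (Suc m) \<le> JJ m" "\<forall>m. 0 \<le> JJ m \<and> JJ m \<le> int N"
proof -
  show "\<forall>m. 0 \<le> JJ m \<and> JJ m \<le> int N"
    using io_bounds Mq by (auto simp: JJ_def)
  show "\<forall>m\<in>{1..M}. JJ (Suc m) \<le> JJ m"
  proof
    fix m assume m: "m \<in> {1..M}"
    show "JJ (Suc m) \<le> JJ m"
    proof (cases "m = 1")
      case True thus ?thesis using io_bounds[of 2] M2 Mq by (auto simp: JJ_def numeral_2_eq_2)
    next
      case False
      hence m2: "2 \<le> m" using m by auto
      show ?thesis
      proof (cases "Suc m \<le> M")
        case True thus ?thesis using io_mono[OF m2, of "Suc m"] Mq m2 by (auto simp: JJ_def)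
      next
        case False thus ?thesis using io_bounds[OF m2] m Mq m2 by (auto simp: JJ_def)
      qed
    qed
  qed
qed

lemma grid_ex: "\<exists>w0. w0 \<in> weights_grid M N \<and> RW w0 = Fv"
proof -
  define s where "s m = real_of_int (JJ m) / real N" for m
  have N: "real N > 0" using Npos by simp
  have s1: "s 1 = 1" using N by (simp add: s_def JJ_def)
  have sM: "s (Suc M) = 0" using M2 by (simp add: s_def JJ_def)
  have smono: "\<forall>m\<in>{1..M}. s (Suc m) \<le> s m"
    using JJ_props(1) N by (auto simp: s_def divide_right_mono)
  have sb: "\<forall>m\<in>{1..Suc M}. 0 \<le> s m \<and> s m \<le> 1"
  proof
    fix m
    have "0 \<le> JJ m" "JJ m \<le> int N" using JJ_props(2) by auto
    hence "0 \<le> real_of_int (JJ m)" "real_of_int (JJ m) \<le> real N" by linarith+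
    thus "0 \<le> s m \<and> s m \<le> 1" using N by (simp add: s_def divide_simps)
  qed
  define w0 where "w0 = (\<lambda>m. if m \<in> {1..M} then s m - s (Suc m) else 0)"
  have W: "w0 \<in> weights M" "\<forall>m\<in>{1..M}. Tw w0 m = s m"
    using weight_constr[OF s1 sM smono sb] unfolding w0_def by auto
  have grid: "\<forall>m\<in>{1..M}. \<exists>k\<in>{0..N}. w0 m = real k / real N"
  proof
    fix m assume m: "m \<in> {1..M}"
    let ?k = "nat (JJ m - JJ (Suc m))"
    have le: "JJ (Suc m) \<le> JJ m" using JJ_props(1) m by auto
    have b: "0 \<le> JJ (Suc m)" "JJ m \<le> int N" using JJ_props(2) by auto
    have "w0 m = real_of_int (JJ m - JJ (Suc m)) / real N" using m by (simp add: w0_def s_def diff_divide_distrib)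
    also have "real_of_int (JJ m - JJ (Suc m)) = real ?k" using le by simp
    finally have "w0 m = real ?k / real N" .
    moreover have "?k \<in> {0..N}" using le b by auto
    ultimately show "\<exists>k\<in>{0..N}. w0 m = real k / real N" by blast
  qed
  have "RW w0 = Fv"
  proof -
    have "(\<Sum>m\<in>{2..M}. gg m (Tw w0 m)) = (\<Sum>m\<in>{2..M}. gg m (rnd m))"
      using W(2) by (intro sum.cong refl) (auto simp: s_def JJ_def rnd_def)
    thus ?thesis unfolding risk_w3[OF W(1)] Fv_def by simp
  qed
  thus ?thesis using W(1) grid by (auto simp: weights_grid_def)
qed

lemma cont_ex: "\<exists>w1. w1 \<in> weights M \<and> RW w1 = Hv"
proof -
  define s where "s m = (if m \<le> 1 then 1 else if m \<le> M then gm m else 0)" for m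
  have s1: "s 1 = 1" by (simp add: s_def)
  have sM: "s (Suc M) = 0" using M2 by (simp add: s_def)
  have smono: "\<forall>m\<in>{1..M}. s (Suc m) \<le> s m"
  proof
    fix m assume m: "m \<in> {1..M}"
    show "s (Suc m) \<le> s m"
    proof (cases "m = 1")
      case True thus ?thesis using gm_bounds[of 2] M2 Mq by (auto simp: s_def numeral_2_eq_2)
    next
      case False
      hence m2: "2 \<le> m" using m by auto
      show ?thesis
      proof (cases "Suc m \<le> M")
        case True thus ?thesis using gm_mono[OF m2, of "Suc m"] Mq m2 by (auto simp: s_def)
      next
        case False thus ?thesis using gm_bounds[of m] m Mq m2 by (auto simp: s_def)
      qed
    qed
  qed
  have sb: "\<forall>m\<in>{1..Suc M}. 0 \<le> s m \<and> s m \<le> 1"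
    using gm_bounds Mq by (auto simp: s_def less_imp_le)
  define w1 where "w1 = (\<lambda>m. if m \<in> {1..M} then s m - s (Suc m) else 0)"
  have W: "w1 \<in> weights M" "\<forall>m\<in>{1..M}. Tw w1 m = s m"
    using weight_constr[OF s1 sM smono sb] unfolding w1_def by auto
  have "RW w1 = Hv"
  proof -
    have "(\<Sum>m\<in>{2..M}. gg m (Tw w1 m)) = (\<Sum>m\<in>{2..M}. gg m (gm m))"
      using W(2) by (intro sum.cong refl) (auto simp: s_def)
    thus ?thesis unfolding risk_w3[OF W(1)] Hv_def by simp
  qed
  thus ?thesis using W(1) by blast
qed

lemma minN_val: "w \<in> weights_grid M N \<Longrightarrow> (\<forall>v\<in>weights_grid M N. RW w \<le> RW v) \<Longrightarrow> RW w = Fv"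
  using grid_ex grid_lb by (metis order_antisym)

lemma min_val: "w \<in> weights M \<Longrightarrow> (\<forall>v\<in>weights M. RW w \<le> RW v) \<Longrightarrow> RW w = Hv"
  using cont_ex cont_lb by (metis order_antisym)

lemma Fv_Hv: "Fv = Hv + (\<Sum>m\<in>{2..M}. (acf m + bcf m) * (rnd m - gm m)\<^sup>2)"
proof -
  have "(\<Sum>m\<in>{2..M}. gg m (rnd m)) = (\<Sum>m\<in>{2..M}. gg m (gm m) + (acf m + bcf m) * (rnd m - gm m)\<^sup>2)"
  proof (intro sum.cong refl)
    fix m assume "m \<in> {2..M}"
    hence m: "1 \<le> m" "m \<le> q" using Mq by auto
    show "gg m (rnd m) = gg m (gm m) + (acf m + bcf m) * (rnd m - gm m)\<^sup>2"
      unfolding gg_eq[OF m] by simp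
  qed
  thus ?thesis unfolding Fv_def Hv_def by (simp add: sum.distrib)
qed


lemma io_le_iff: "real_of_int (io m) \<le> real_of_int i \<longleftrightarrow> gm m \<le> (2 * real_of_int i + 1) / (2 * real N)"
proof -
  have N: "real N > 0" using Npos by simp
  have "io m \<le> i \<longleftrightarrow> real N * gm m - 1/2 \<le> real_of_int i" unfolding io_def by (rule ceiling_le_iff)
  also have "\<dots> \<longleftrightarrow> gm m \<le> (2 * real_of_int i + 1) / (2 * real N)" using N by (simp add: field_simps)
  finally show ?thesis by simp
qed

lemma io_ge_iff: "real_of_int i \<le> real_of_int (io m) \<longleftrightarrow> (2 * real_of_int i - 1) / (2 * real N) < gm m"
proof -
  have N: "real N > 0" using Npos by simp
  have "i \<le> io m \<longleftrightarrow> real_of_int i - 1 < real N * gm m - 1/2" unfolding io_def by (rule le_ceiling_iff)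
  also have "\<dots> \<longleftrightarrow> (2 * real_of_int i - 1) / (2 * real N) < gm m" using N by (simp add: field_simps)
  finally show ?thesis by simp
qed

lemma zpos: "1 \<le> i \<Longrightarrow> 0 < (2 * real_of_int i - 1) / (2 * real N)" "0 \<le> i \<Longrightarrow> 0 < (2 * real_of_int i + 1) / (2 * real N)"
  using Npos by (auto simp: field_simps)

lemma ioM_nonneg: "0 \<le> io M" using io_bounds M2 Mq by auto

lemma set_b:
  assumes i: "i \<in> {io M + 1..int N}"
  shows "{mz ((2 * real_of_int i + 1) / (2 * real N)) + 1 .. mz ((2 * real_of_int i - 1) / (2 * real N))}
       = {x \<in> {m \<in> {2..M}. io M < io m}. io x = i}"
proof -
  let ?zp = "(2 * real_of_int i + 1) / (2 * real N)" and ?zm = "(2 * real_of_int i - 1) / (2 * real N)"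
  have i1: "1 \<le> i" using i ioM_nonneg by auto
  have zp: "0 < ?zp" and zm: "0 < ?zm" using zpos i1 by auto
  note P = mz_props[OF zp] and Q = mz_props[OF zm]
  show ?thesis
  proof (rule Set.set_eqI, rule iffI)
    fix m assume m: "m \<in> {mz ?zp + 1 .. mz ?zm}"
    have m2: "2 \<le> m" "m \<le> q" using m P(1) Q(2) by auto
    have "gm m > ?zm" using Q(3)[OF m2] m by auto
    hence ge: "i \<le> io m" using io_ge_iff[of i m] by simp
    have "\<not> gm m > ?zp" using P(3)[OF m2] m by auto
    hence le: "io m \<le> i" using io_le_iff[of m i] by simp
    have "m \<le> M"
    proof (rule ccontr)
      assume "\<not> m \<le> M"
      hence "io m \<le> io M" using io_mono[of M m] M2 m2 by auto
      thus False using ge i by auto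
    qed
    thus "m \<in> {x \<in> {m \<in> {2..M}. io M < io m}. io x = i}" using ge le m2 i by auto
  next
    fix m assume m: "m \<in> {x \<in> {m \<in> {2..M}. io M < io m}. io x = i}"
    have m2: "2 \<le> m" "m \<le> q" using m Mq by auto
    have "gm m > ?zm" using io_ge_iff[of i m] m by simp
    hence "m \<le> mz ?zm" using Q(3)[OF m2] by simp
    moreover have "\<not> gm m > ?zp" using io_le_iff[of m i] m by simp
    hence "\<not> m \<le> mz ?zp" using P(3)[OF m2] by simp
    ultimately show "m \<in> {mz ?zp + 1 .. mz ?zm}" by simp
  qed
qed

lemma set_c:
  "{mz ((2 * real_of_int (io M) + 1) / (2 * real N)) + 1 .. M} = {m \<in> {2..M}. io m = io M}"
proof -
  let ?zp = "(2 * real_of_int (io M) + 1) / (2 * real N)"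
  have zp: "0 < ?zp" using zpos(2)[OF ioM_nonneg] .
  note P = mz_props[OF zp]
  show ?thesis
  proof (rule Set.set_eqI, rule iffI)
    fix m assume m: "m \<in> {mz ?zp + 1 .. M}"
    have m2: "2 \<le> m" "m \<le> q" using m P(1) Mq by auto
    have "\<not> gm m > ?zp" using P(3)[OF m2] m by auto
    hence le: "io m \<le> io M" using io_le_iff[of m "io M"] by simp
    have "io M \<le> io m" using io_mono[of m M] m2 m Mq by auto
    thus "m \<in> {m \<in> {2..M}. io m = io M}" using le m m2 by auto
  next
    fix m assume m: "m \<in> {m \<in> {2..M}. io m = io M}"
    have m2: "2 \<le> m" "m \<le> q" using m Mq by auto
    have "\<not> gm m > ?zp" using io_le_iff[of m "io M"] m by simp
    hence "\<not> m \<le> mz ?zp" using P(3)[OF m2] by simp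
    thus "m \<in> {mz ?zp + 1 .. M}" using m by simp
  qed
qed

lemma reindex:
  "(\<Sum>m\<in>{2..M}. h (io m) m) =
     (\<Sum>i\<in>{io M + 1..int N}.
        \<Sum>m\<in>{mz ((2 * real_of_int i + 1) / (2 * real N)) + 1 .. mz ((2 * real_of_int i - 1) / (2 * real N))}. h i m)
     + (\<Sum>m\<in>{mz ((2 * real_of_int (io M) + 1) / (2 * real N)) + 1 .. M}. h (io M) m)"
proof -
  let ?S1 = "{m \<in> {2..M}. io M < io m}" and ?S2 = "{m \<in> {2..M}. io m = io M}"
  have un: "{2..M} = ?S1 \<union> ?S2" using io_mono[of _ M] Mq by force
  have dj: "?S1 \<inter> ?S2 = {}" by auto
  have "(\<Sum>m\<in>{2..M}. h (io m) m) = (\<Sum>m\<in>?S1. h (io m) m) + (\<Sum>m\<in>?S2. h (io m) m)"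
    by (subst un, rule sum.union_disjoint) auto
  also have "(\<Sum>m\<in>?S2. h (io m) m) = (\<Sum>m\<in>{mz ((2 * real_of_int (io M) + 1) / (2 * real N)) + 1 .. M}. h (io M) m)"
    unfolding set_c by (intro sum.cong refl) auto
  also have "(\<Sum>m\<in>?S1. h (io m) m) = (\<Sum>i\<in>{io M + 1..int N}. \<Sum>m\<in>{x. x \<in> ?S1 \<and> io x = i}. h (io m) m)"
  proof (rule sum.group[where S="?S1" and T="{io M + 1..int N}" and g=io and h="\<lambda>m. h (io m) m", symmetric])
    show "io ` ?S1 \<subseteq> {io M + 1..int N}" using io_bounds Mq by fastforce
  qed auto
  also have "\<dots> = (\<Sum>i\<in>{io M + 1..int N}.
        \<Sum>m\<in>{mz ((2 * real_of_int i + 1) / (2 * real N)) + 1 .. mz ((2 * real_of_int i - 1) / (2 * real N))}. h i m)"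
  proof (rule sum.cong[OF refl])
    fix i assume i: "i \<in> {io M + 1..int N}"
    show "(\<Sum>m\<in>{x. x \<in> ?S1 \<and> io x = i}. h (io m) m) =
        (\<Sum>m\<in>{mz ((2 * real_of_int i + 1) / (2 * real N)) + 1 .. mz ((2 * real_of_int i - 1) / (2 * real N))}. h i m)"
      unfolding set_b[OF i] by (intro sum.cong) auto
  qed
  finally show ?thesis .
qed

lemma second_inner:
  assumes m: "m \<in> {2..M}"
  shows "(\<Sum>i\<in>{0..N}. (real i / real N - gm m)\<^sup>2 *
           (if (2 * real i - 1) / (2 * real N) < gm m \<and> gm m \<le> (2 * real i + 1) / (2 * real N) then 1 else 0))
       = (rnd m - gm m)\<^sup>2"
proof -
  have m2: "2 \<le> m" "m \<le> q" using m Mq by auto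
  have b: "0 \<le> io m" "io m \<le> int N" using io_bounds[OF m2] by auto
  let ?k = "nat (io m)"
  have cond: "((2 * real i - 1) / (2 * real N) < gm m \<and> gm m \<le> (2 * real i + 1) / (2 * real N)) \<longleftrightarrow> i = ?k" for i
  proof -
    have "((2 * real i - 1) / (2 * real N) < gm m \<and> gm m \<le> (2 * real i + 1) / (2 * real N))
        \<longleftrightarrow> real_of_int (int i) \<le> real_of_int (io m) \<and> real_of_int (io m) \<le> real_of_int (int i)"
      using io_ge_iff[of "int i" m] io_le_iff[of m "int i"] by simp
    also have "\<dots> \<longleftrightarrow> i = ?k" using b by linarith
    finally show ?thesis .
  qed
  have "(\<Sum>i\<in>{0..N}. (real i / real N - gm m)\<^sup>2 *
           (if (2 * real i - 1) / (2 * real N) < gm m \<and> gm m \<le> (2 * real i + 1) / (2 * real N) then 1 else 0))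
       = (\<Sum>i\<in>{0..N}. if i = ?k then (real i / real N - gm m)\<^sup>2 else 0)"
    by (intro sum.cong refl) (simp add: cond)
  also have "\<dots> = (real ?k / real N - gm m)\<^sup>2" using b by (simp add: nat_le_iff)
  also have "real ?k = real_of_int (io m)" using b by simp
  finally show ?thesis by (simp add: rnd_def)
qed


lemma final:
  "(let M = M;
         R = risk_weight Pr eps X \<nu> \<beta> M;
         a = a_coef X \<nu> \<beta>;
         b = b_coef X \<nu> \<Omega>;
         \<gamma> = gamma_star X \<nu> \<beta> \<Omega>;
         mz = m_of X \<nu> \<beta> \<Omega> q;
         iN = i_idx X \<nu> \<beta> \<Omega> M N;
         \<mu> = X *\<^sub>v \<beta>;
         isminN = (\<lambda>w. w \<in> weights_grid M N \<and> (\<forall>v\<in>weights_grid M N. R w \<le> R v));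
         ismin = (\<lambda>w. w \<in> weights M \<and> (\<forall>v\<in>weights M. R w \<le> R v))
     in
     (\<forall>w. isminN w \<longrightarrow>
        R w = trace_mat (Pm X \<nu> 1 * \<Omega>)
              + \<mu> \<bullet> ((1\<^sub>m n - Pm X \<nu> M) *\<^sub>v \<mu>)
              + (\<Sum>i\<in>{iN + 1..int N}.
                   \<Sum>m\<in>{mz ((2 * real_of_int i + 1) / (2 * real N)) + 1 ..
                          mz ((2 * real_of_int i - 1) / (2 * real N))}.
                     (real_of_int i / real N)\<^sup>2 * b m + (1 - real_of_int i / real N)\<^sup>2 * a m)
              + (\<Sum>m\<in>{mz ((2 * real_of_int iN + 1) / (2 * real N)) + 1 .. M}.
                     (real_of_int iN / real N)\<^sup>2 * b m + (1 - real_of_int iN / real N)\<^sup>2 * a m))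
     \<and>
     (\<forall>w ws. isminN w \<longrightarrow> ismin ws \<longrightarrow>
        R w = R ws + (\<Sum>m\<in>{2..M}. (a m + b m) *
                 (\<Sum>i\<in>{0..N}. (real i / real N - \<gamma> m)\<^sup>2 *
                    (if (2 * real i - 1) / (2 * real N) < \<gamma> m \<and> \<gamma> m \<le> (2 * real i + 1) / (2 * real N)
                     then 1 else 0)))))"
proof -
  have iN: "i_idx X \<nu> \<beta> \<Omega> M N = io M"
    unfolding i_idx_def io_def using gamma_eq M2 Mq by simp
  let ?h = "\<lambda>i m. (real_of_int i / real N)\<^sup>2 * b_coef X \<nu> \<Omega> m + (1 - real_of_int i / real N)\<^sup>2 * a_coef X \<nu> \<beta> m"
  have hsum: "(\<Sum>m\<in>{2..M}. gg m (rnd m)) = (\<Sum>m\<in>{2..M}. ?h (io m) m)"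
  proof (rule sum.cong[OF refl])
    fix m assume "m \<in> {2..M}" hence m: "1 \<le> m" "m \<le> q" using Mq by auto
    show "gg m (rnd m) = ?h (io m) m" unfolding gg_def rnd_def acoef_eq[OF m] bcoef_eq[OF m] ..
  qed
  have tr1: "trace_mat (Pm X \<nu> 1 * \<Omega>) = bcf 1" unfolding bcf_def ee_def[symmetric] using ee0 by simp
  have K: "(X *\<^sub>v \<beta>) \<bullet> ((1\<^sub>m n - Pm X \<nu> M) *\<^sub>v (X *\<^sub>v \<beta>)) = K0"
    using K_eq unfolding K0_def mu_def .
  have part1: "RW w = trace_mat (Pm X \<nu> 1 * \<Omega>)
              + (X *\<^sub>v \<beta>) \<bullet> ((1\<^sub>m n - Pm X \<nu> M) *\<^sub>v (X *\<^sub>v \<beta>))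
              + (\<Sum>i\<in>{io M + 1..int N}.
                   \<Sum>m\<in>{mz ((2 * real_of_int i + 1) / (2 * real N)) + 1 ..
                          mz ((2 * real_of_int i - 1) / (2 * real N))}. ?h i m)
              + (\<Sum>m\<in>{mz ((2 * real_of_int (io M) + 1) / (2 * real N)) + 1 .. M}. ?h (io M) m)"
    if "w \<in> weights_grid M N" "\<forall>v\<in>weights_grid M N. RW w \<le> RW v" for w
    using minN_val[OF that] reindex[of ?h] hsum tr1 K unfolding Fv_def by simp
  have part2: "RW w = RW ws + (\<Sum>m\<in>{2..M}. (a_coef X \<nu> \<beta> m + b_coef X \<nu> \<Omega> m) *
                 (\<Sum>i\<in>{0..N}. (real i / real N - gamma_star X \<nu> \<beta> \<Omega> m)\<^sup>2 *
                    (if (2 * real i - 1) / (2 * real N) < gamma_star X \<nu> \<beta> \<Omega> m \<and>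
                        gamma_star X \<nu> \<beta> \<Omega> m \<le> (2 * real i + 1) / (2 * real N)
                     then 1 else 0)))"
    if "w \<in> weights_grid M N" "\<forall>v\<in>weights_grid M N. RW w \<le> RW v"
       "ws \<in> weights M" "\<forall>v\<in>weights M. RW ws \<le> RW v" for w ws
  proof -
    have "(\<Sum>m\<in>{2..M}. (a_coef X \<nu> \<beta> m + b_coef X \<nu> \<Omega> m) *
                 (\<Sum>i\<in>{0..N}. (real i / real N - gamma_star X \<nu> \<beta> \<Omega> m)\<^sup>2 *
                    (if (2 * real i - 1) / (2 * real N) < gamma_star X \<nu> \<beta> \<Omega> m \<and>
                        gamma_star X \<nu> \<beta> \<Omega> m \<le> (2 * real i + 1) / (2 * real N)
                     then 1 else 0)))
        = (\<Sum>m\<in>{2..M}. (acf m + bcf m) * (rnd m - gm m)\<^sup>2)"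
    proof (rule sum.cong[OF refl])
      fix m assume mm: "m \<in> {2..M}" hence m: "1 \<le> m" "m \<le> q" "2 \<le> m" using Mq by auto
      show "(a_coef X \<nu> \<beta> m + b_coef X \<nu> \<Omega> m) *
                 (\<Sum>i\<in>{0..N}. (real i / real N - gamma_star X \<nu> \<beta> \<Omega> m)\<^sup>2 *
                    (if (2 * real i - 1) / (2 * real N) < gamma_star X \<nu> \<beta> \<Omega> m \<and>
                        gamma_star X \<nu> \<beta> \<Omega> m \<le> (2 * real i + 1) / (2 * real N)
                     then 1 else 0)) = (acf m + bcf m) * (rnd m - gm m)\<^sup>2"
        unfolding acoef_eq[OF m(1,2)] bcoef_eq[OF m(1,2)] gamma_eq[OF m(3,2)] second_inner[OF mm] ..
    qed
    thus ?thesis using minN_val[OF that(1,2)] min_val[OF that(3,4)] Fv_Hv by simp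
  qed
  show ?thesis unfolding Let_def iN using part1 part2 by blast
qed

end

theorem lemmaA1:
  fixes X :: "nat \<Rightarrow> real mat" and p q Mn :: "nat \<Rightarrow> nat" and \<nu> :: "nat \<Rightarrow> nat \<Rightarrow> nat"
    and \<beta> :: "nat \<Rightarrow> real vec" and \<Omega> :: "nat \<Rightarrow> real mat"
    and Pr :: "nat \<Rightarrow> 'a measure" and eps :: "nat \<Rightarrow> 'a \<Rightarrow> real vec"
    and N :: nat
  assumes setting: "\<forall>\<^sub>F n in sequentially.
      X n \<in> carrier_mat n (p n) \<and> p n < n \<and>
      \<nu> n 0 = 0 \<and> (\<forall>m<q n. \<nu> n m < \<nu> n (Suc m)) \<and> \<nu> n (q n) = p n \<and>
      (\<forall>m\<in>{1..q n}. \<forall>v\<in>carrier_vec (\<nu> n m).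
          firstcols (X n) (\<nu> n m) *\<^sub>v v = 0\<^sub>v n \<longrightarrow> v = 0\<^sub>v (\<nu> n m)) \<and>
      2 \<le> Mn n \<and> Mn n \<le> q n \<and>
      \<beta> n \<in> carrier_vec (p n) \<and>
      \<Omega> n \<in> carrier_mat n n \<and> pos_def_mat (\<Omega> n) \<and>
      prob_space (Pr n) \<and>
      (\<forall>\<omega>\<in>space (Pr n). eps n \<omega> \<in> carrier_vec n) \<and>
      (\<forall>i<n. (\<lambda>\<omega>. eps n \<omega> $ i) \<in> borel_measurable (Pr n) \<and>
             integrable (Pr n) (\<lambda>\<omega>. (eps n \<omega> $ i)\<^sup>2) \<and>
             integral\<^sup>L (Pr n) (\<lambda>\<omega>. eps n \<omega> $ i) = 0) \<and>
      (\<forall>i<n. \<forall>j<n. integral\<^sup>L (Pr n) (\<lambda>\<omega>. eps n \<omega> $ i * eps n \<omega> $ j) = \<Omega> n $$ (i, j))"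
  and assm3: "\<forall>\<^sub>F n in sequentially. \<forall>m\<in>{1..<q n}.
      theta (X n) (\<nu> n) (\<beta> n) (\<Omega> n) m \<ge> theta (X n) (\<nu> n) (\<beta> n) (\<Omega> n) (Suc m)"
  and assm6: "\<forall>\<^sub>F n in sequentially.
      (let d = d_idx (X n) (\<nu> n) (\<beta> n) (\<Omega> n) (q n);
           R = risk_model (Pr n) (eps n) (X n) (\<nu> n) (\<beta> n) in
       \<exists>m'\<in>{1..d - 1}. (\<forall>m\<in>{2..m'}. R m < R (m - 1)) \<and>
                       (\<forall>m\<in>{m' + 1..d}. R m \<ge> R (m - 1)) \<and>
                       R d > R (d - 1))"
  and N_pos: "0 < N"
  shows "\<forall>\<^sub>F n in sequentially.
    (let M = Mn n;
         R = risk_weight (Pr n) (eps n) (X n) (\<nu> n) (\<beta> n) M;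
         a = a_coef (X n) (\<nu> n) (\<beta> n);
         b = b_coef (X n) (\<nu> n) (\<Omega> n);
         \<gamma> = gamma_star (X n) (\<nu> n) (\<beta> n) (\<Omega> n);
         mz = m_of (X n) (\<nu> n) (\<beta> n) (\<Omega> n) (q n);
         iN = i_idx (X n) (\<nu> n) (\<beta> n) (\<Omega> n) M N;
         \<mu> = X n *\<^sub>v \<beta> n;
         isminN = (\<lambda>w. w \<in> weights_grid M N \<and> (\<forall>v\<in>weights_grid M N. R w \<le> R v));
         ismin = (\<lambda>w. w \<in> weights M \<and> (\<forall>v\<in>weights M. R w \<le> R v))
     in
     (\<forall>w. isminN w \<longrightarrow>
        R w = trace_mat (Pm (X n) (\<nu> n) 1 * \<Omega> n)
              + \<mu> \<bullet> ((1\<^sub>m n - Pm (X n) (\<nu> n) M) *\<^sub>v \<mu>)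
              + (\<Sum>i\<in>{iN + 1..int N}.
                   \<Sum>m\<in>{mz ((2 * real_of_int i + 1) / (2 * real N)) + 1 ..
                          mz ((2 * real_of_int i - 1) / (2 * real N))}.
                     (real_of_int i / real N)\<^sup>2 * b m + (1 - real_of_int i / real N)\<^sup>2 * a m)
              + (\<Sum>m\<in>{mz ((2 * real_of_int iN + 1) / (2 * real N)) + 1 .. M}.
                     (real_of_int iN / real N)\<^sup>2 * b m + (1 - real_of_int iN / real N)\<^sup>2 * a m))
     \<and>
     (\<forall>w ws. isminN w \<longrightarrow> ismin ws \<longrightarrow>
        R w = R ws + (\<Sum>m\<in>{2..M}. (a m + b m) *
                 (\<Sum>i\<in>{0..N}. (real i / real N - \<gamma> m)\<^sup>2 *
                    (if (2 * real i - 1) / (2 * real N) < \<gamma> m \<and> \<gamma> m \<le> (2 * real i + 1) / (2 * real N)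
                     then 1 else 0)))))"
    apply (rule eventually_mono[OF eventually_conj[OF setting assm3]])
  subgoal premises h for n
    apply (rule LA.final[of "X n" n "p n" "q n" "Mn n" N "\<nu> n" "\<beta> n" "\<Omega> n" "Pr n" "eps n"])
    apply (insert h N_pos)
    apply (elim conjE)
    apply (rule LA.intro)
                  apply assumption+
    done
  done

end
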